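(* Every graph $G\in\mathcal{C}$, with $n$ vertices, $m$ edges, $k$ components and $c_1$ induced cycles of length congruent to $1$ modulo $3$, satisfies $\mathrm{diss}(G)= n-\frac{1}{3}(m+k+c_1)$. Furthermore, for every vertex $u$ of every graph $G\in\mathcal{C}$, the graph $G$ has a maximum dissociation set not containing $u$.
   Context: A set $D$ of vertices of a graph $G$ is a dissociation set if the induced subgraph $G[D]$ has maximum degree at most $1$; $\mathrm{diss}(G)$ is the maximum cardinality of a dissociation set, and a maximum dissociation set is one of that cardinality. An induced cycle is a cycle subgraph $C$ with $G[V(C)]=C$. Spiked cycles: for positive integers $\ell,k$ with $\ell\geq\max\{3,k\}$ and indices $1\le i_1<\dots<i_k\le \ell$, the spiked cycle $C^*$ with $k$ spikes at $\{i_1,\dots,i_k\}$ arises from the cycle $u_1u_2\dots u_\ell u_1$ by adding, for each $j$, a new vertex $v_{i_j}$ adjacent only to $u_{i_j}$. It is good if either $k=1$ and $\ell\equiv 1\pmod 3$, or $k\ge 2$, $i_{j+1}-i_j\equiv 2\pmod 3$ for all $j\in\{1,\dots,k-1\}$, and $\ell+i_1-i_k\equiv 1\pmod 3$. It is very good if it is good and $\ell\not\equiv 1\pmod 3$. Operations on a graph $G'$: $(O_1)$ add new vertices $u,v,w$ with edges $uv,vw$ and an edge from $w$ to some vertex of $G'$; $(O_2)$ add new vertices $v,u,u'$ with edges $vu,vu'$ and an edge from $v$ to some vertex of $G'$; $(O_3)$ add a disjoint new cycle $C_\ell$ with $\ell\ge 3$, $\ell\not\equiv 0\pmod 3$, and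 an edge from some vertex of the cycle to some vertex of $G'$; $(O_4)$ add a disjoint new very good spiked cycle $C^*$ and an edge between some vertex of $G'$ and some vertex of $C^*$. Let $\mathcal{C}_0$ consist of $P_3$, all cycles $C_\ell$ with $\ell\ge 3$ and $\ell\not\equiv 0\pmod 3$, and all very good spiked cycles. $\mathcal{C}$ is the set of all graphs obtained from graphs in $\mathcal{C}_0$ by finitely many (possibly zero) applications of the operations $(O_1)$, $(O_2)$, $(O_3)$, $(O_4)$. *)

theory Defs
  imports Complex_Main
begin

text \<open>Finite simple graphs are given as a pair (V, E) with E a set of 2-element subsets of V.\<close>

definition adj :: "'a set set \<Rightarrow> 'a \<Rightarrow> 'a \<Rightarrow> bool" where
  "adj E x y \<longleftrightarrow> {x, y} \<in> E"

definition dissociation_set :: "'a set \<Rightarrow> 'a set set \<Rightarrow> 'a set \<Rightarrow> bool" where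
  "dissociation_set V E D \<longleftrightarrow> D \<subseteq> V \<and> (\<forall>x\<in>D. card {y\<in>D. adj E x y} \<le> 1)"

definition diss :: "'a set \<Rightarrow> 'a set set \<Rightarrow> nat" where
  "diss V E = Max {card D | D. dissociation_set V E D}"

definition max_dissociation_set :: "'a set \<Rightarrow> 'a set set \<Rightarrow> 'a set \<Rightarrow> bool" where
  "max_dissociation_set V E D \<longleftrightarrow> dissociation_set V E D \<and> card D = diss V E"

definition cycle_edges :: "'a list \<Rightarrow> 'a set set" where
  "cycle_edges vs = {{vs ! i, vs ! (Suc i mod length vs)} | i. i < length vs}"

definition is_cycle_graph :: "'a list \<Rightarrow> 'a set \<Rightarrow> 'a set set \<Rightarrow> bool" where
  "is_cycle_graph vs V E \<longleftrightarrow> length vs \<ge> 3 \<and> distinct vs \<and> V = set vs \<and> E = cycle_edges vs"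

text \<open>Spiked cycle: cycle us = u_0 ... u_(l-1) (0-indexed), spike positions I, spike vertex sp i
  adjacent only to us!i.\<close>
definition is_spiked_cycle :: "'a list \<Rightarrow> nat set \<Rightarrow> (nat \<Rightarrow> 'a) \<Rightarrow> 'a set \<Rightarrow> 'a set set \<Rightarrow> bool" where
  "is_spiked_cycle us I sp V E \<longleftrightarrow>
     length us \<ge> 3 \<and> distinct us \<and> I \<subseteq> {..<length us} \<and> I \<noteq> {} \<and>
     inj_on sp I \<and> sp ` I \<inter> set us = {} \<and>
     V = set us \<union> sp ` I \<and>
     E = cycle_edges us \<union> {{us ! i, sp i} | i. i \<in> I}"

text \<open>Goodness, in terms of the sorted spike positions i_1 < ... < i_k (shifting all indices by one
  does not affect differences).\<close>
definition good_spikes :: "nat \<Rightarrow> nat set \<Rightarrow> bool" where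
  "good_spikes l I \<longleftrightarrow>
     (let is = sorted_list_of_set I; k = length is in
       (k = 1 \<and> l mod 3 = 1) \<or>
       (k \<ge> 2 \<and> (\<forall>j. j + 1 < k \<longrightarrow> (is ! (j + 1) - is ! j) mod 3 = 2)
              \<and> (l + is ! 0 - is ! (k - 1)) mod 3 = 1))"

definition very_good_spikes :: "nat \<Rightarrow> nat set \<Rightarrow> bool" where
  "very_good_spikes l I \<longleftrightarrow> good_spikes l I \<and> l mod 3 \<noteq> 1"

definition very_good_spiked_cycle :: "'a set \<Rightarrow> 'a set set \<Rightarrow> bool" where
  "very_good_spiked_cycle V E \<longleftrightarrow>
     (\<exists>us I sp. is_spiked_cycle us I sp V E \<and> very_good_spikes (length us) I)"

definition good_cycle :: "'a set \<Rightarrow> 'a set set \<Rightarrow> bool" where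
  "good_cycle V E \<longleftrightarrow> (\<exists>vs. is_cycle_graph vs V E \<and> length vs mod 3 \<noteq> 0)"

inductive inC :: "'a set \<Rightarrow> 'a set set \<Rightarrow> bool" where
  base_P3: "distinct [a, b, c] \<Longrightarrow> inC {a, b, c} {{a, b}, {b, c}}"
| base_cycle: "good_cycle V E \<Longrightarrow> inC V E"
| base_spiked: "very_good_spiked_cycle V E \<Longrightarrow> inC V E"
| op1: "inC V E \<Longrightarrow> distinct [u, v, w] \<Longrightarrow> u \<notin> V \<Longrightarrow> v \<notin> V \<Longrightarrow> w \<notin> V \<Longrightarrow> x \<in> V \<Longrightarrow>
        inC (V \<union> {u, v, w}) (E \<union> {{u, v}, {v, w}, {w, x}})"
| op2: "inC V E \<Longrightarrow> distinct [v, u, u'] \<Longrightarrow> v \<notin> V \<Longrightarrow> u \<notin> V \<Longrightarrow> u' \<notin> V \<Longrightarrow> x \<in> V \<Longrightarrow>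
        inC (V \<union> {v, u, u'}) (E \<union> {{v, u}, {v, u'}, {v, x}})"
| op3: "inC V E \<Longrightarrow> good_cycle H EH \<Longrightarrow> H \<inter> V = {} \<Longrightarrow> y \<in> H \<Longrightarrow> x \<in> V \<Longrightarrow>
        inC (V \<union> H) (E \<union> EH \<union> {{x, y}})"
| op4: "inC V E \<Longrightarrow> very_good_spiked_cycle H EH \<Longrightarrow> H \<inter> V = {} \<Longrightarrow> y \<in> H \<Longrightarrow> x \<in> V \<Longrightarrow>
        inC (V \<union> H) (E \<union> EH \<union> {{x, y}})"

definition reach :: "'a set \<Rightarrow> 'a set set \<Rightarrow> 'a \<Rightarrow> 'a \<Rightarrow> bool" where
  "reach V E = (\<lambda>x y. x \<in> V \<and> y \<in> V \<and> adj E x y)\<^sup>*\<^sup>*"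

definition components :: "'a set \<Rightarrow> 'a set set \<Rightarrow> 'a set set" where
  "components V E = {{y \<in> V. reach V E x y} | x. x \<in> V}"

text \<open>Induced cycles, identified with their vertex sets S (an induced cycle is determined by S).\<close>
definition induced_cycle_sets :: "'a set \<Rightarrow> 'a set set \<Rightarrow> 'a set set" where
  "induced_cycle_sets V E = {S. S \<subseteq> V \<and> (\<exists>vs. is_cycle_graph vs S {e \<in> E. e \<subseteq> S})}"

end

theory Submission
  imports Defs
begin

lemma adj_sym: "adj E x y = adj E y x"
  by (simp add: adj_def insert_commute)

definition dfree :: "'a set set \<Rightarrow> 'a set \<Rightarrow> bool" where
  "dfree E D \<longleftrightarrow> (\<forall>x\<in>D. card {y\<in>D. adj E x y} \<le> 1)"

lemma diss_set_iff: "dissociation_set V E D \<longleftrightarrow> D \<subseteq> V \<and> dfree E D"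
  by (simp add: dissociation_set_def dfree_def)

lemma diss_fin_set:
  assumes "finite V"
  shows "finite {card D | D. dissociation_set V E D}"
proof -
  have "{card D | D. dissociation_set V E D} \<subseteq> card ` Pow V"
    by (auto simp: dissociation_set_def)
  thus ?thesis using assms by (meson finite_Pow_iff finite_imageI finite_subset)
qed

lemma diss_empty: "dissociation_set V E {}"
  by (simp add: dissociation_set_def)

lemma diss_ge:
  assumes "finite V" "dissociation_set V E D"
  shows "card D \<le> diss V E"
  unfolding diss_def using diss_fin_set[OF assms(1)] assms(2) by (auto intro: Max_ge)

lemma diss_attained:
  assumes "finite V"
  shows "\<exists>D. dissociation_set V E D \<and> card D = diss V E"
proof -
  have "diss V E \<in> {card D | D. dissociation_set V E D}"
    unfolding diss_def using diss_fin_set[OF assms] diss_empty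
    by (intro Max_in) auto
  thus ?thesis by auto
qed

lemma dfree_union:
  assumes "dfree E A" "dfree E B" "\<forall>a\<in>A. \<forall>b\<in>B. \<not> adj E a b"
  shows "dfree E (A \<union> B)"
  unfolding dfree_def
proof
  fix x assume x: "x \<in> A \<union> B"
  show "card {y \<in> A \<union> B. adj E x y} \<le> 1"
  proof (cases "x \<in> A")
    case True
    hence "{y \<in> A \<union> B. adj E x y} = {y \<in> A. adj E x y}" using assms(3) by auto
    thus ?thesis using assms(1) True by (simp add: dfree_def)
  next
    case False
    hence xB: "x \<in> B" using x by auto
    hence "{y \<in> A \<union> B. adj E x y} = {y \<in> B. adj E x y}" using assms(3) adj_sym by fastforce
    thus ?thesis using assms(2) xB by (simp add: dfree_def)
  qed
qed

lemma dfree_subset_nbrs: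
  assumes "\<forall>x\<in>A. {y\<in>A. adj E x y} \<subseteq> {y\<in>B. adj E x y}" "dfree E B" "A \<subseteq> B" "finite B"
  shows "dfree E A"
  unfolding dfree_def
proof
  fix x assume x: "x \<in> A"
  have "card {y\<in>A. adj E x y} \<le> card {y\<in>B. adj E x y}"
    using assms(1,4) x by (intro card_mono) auto
  also have "\<dots> \<le> 1" using assms(2,3) x by (auto simp: dfree_def)
  finally show "card {y\<in>A. adj E x y} \<le> 1" .
qed

lemma dfree_mono: "dfree E B \<Longrightarrow> A \<subseteq> B \<Longrightarrow> finite B \<Longrightarrow> dfree E A"
  by (rule dfree_subset_nbrs) auto


definition wfg :: "'a set \<Rightarrow> 'a set set \<Rightarrow> bool" where
  "wfg V E \<longleftrightarrow> (\<forall>e\<in>E. \<exists>a b. a \<noteq> b \<and> a \<in> V \<and> b \<in> V \<and> e = {a, b})"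

lemma wfg_adjD: "wfg V E \<Longrightarrow> adj E a b \<Longrightarrow> a \<in> V \<and> b \<in> V \<and> a \<noteq> b"
  unfolding wfg_def adj_def by (metis doubleton_eq_iff insert_absorb2)

lemma wfg_edge_sub: "wfg V E \<Longrightarrow> e \<in> E \<Longrightarrow> e \<subseteq> V"
  unfolding wfg_def by fastforce

lemma glue_nbrs:
  assumes AB: "A \<inter> B = {}" and x: "x \<in> A" and y: "y \<in> B"
    and wA: "wfg A EA" and wB: "wfg B EB"
    and DA: "DA \<subseteq> A" and DB: "DB \<subseteq> B" and xy: "x \<notin> DA \<or> y \<notin> DB"
  shows "z \<in> DA \<Longrightarrow> {w \<in> DA \<union> DB. adj (EA \<union> EB \<union> {{x, y}}) z w} = {w \<in> DA. adj EA z w}"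
    and "z \<in> DB \<Longrightarrow> {w \<in> DA \<union> DB. adj (EA \<union> EB \<union> {{x, y}}) z w} = {w \<in> DB. adj EB z w}"
proof -
  have adjE: "adj (EA \<union> EB \<union> {{x, y}}) a b \<longleftrightarrow> adj EA a b \<or> adj EB a b \<or> {a,b} = {x,y}" for a b
    by (auto simp: adj_def)
  show "z \<in> DA \<Longrightarrow> {w \<in> DA \<union> DB. adj (EA \<union> EB \<union> {{x, y}}) z w} = {w \<in> DA. adj EA z w}"
  proof -
    assume z: "z \<in> DA"
    have "w \<in> DA \<union> DB \<Longrightarrow> adj (EA \<union> EB \<union> {{x, y}}) z w \<Longrightarrow> w \<in> DA \<and> adj EA z w" for w
    proof -
      assume w: "w \<in> DA \<union> DB" and a: "adj (EA \<union> EB \<union> {{x, y}}) z w"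
      have zA: "z \<in> A" using z DA by auto
      have nB: "\<not> adj EB z w" using wfg_adjD[OF wB] zA AB by blast
      show ?thesis
      proof (cases "adj EA z w")
        case True
        then show ?thesis using wfg_adjD[OF wA] w DB AB by blast
      next
        case False
        hence "{z,w} = {x,y}" using a nB adjE by blast
        hence "z = x \<and> w = y \<or> z = y \<and> w = x" by (auto simp: doubleton_eq_iff)
        thus ?thesis using xy z w DA DB AB x y zA by auto
      qed
    qed
    moreover have "adj EA z w \<Longrightarrow> adj (EA \<union> EB \<union> {{x, y}}) z w" for w using adjE by blast
    ultimately show ?thesis by blast
  qed
  show "z \<in> DB \<Longrightarrow> {w \<in> DA \<union> DB. adj (EA \<union> EB \<union> {{x, y}}) z w} = {w \<in> DB. adj EB z w}"
  proof -
    assume z: "z \<in> DB"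
    have "w \<in> DA \<union> DB \<Longrightarrow> adj (EA \<union> EB \<union> {{x, y}}) z w \<Longrightarrow> w \<in> DB \<and> adj EB z w" for w
    proof -
      assume w: "w \<in> DA \<union> DB" and a: "adj (EA \<union> EB \<union> {{x, y}}) z w"
      have zB: "z \<in> B" using z DB by auto
      have nA: "\<not> adj EA z w" using wfg_adjD[OF wA] zB AB by blast
      show ?thesis
      proof (cases "adj EB z w")
        case True
        then show ?thesis using wfg_adjD[OF wB] w DA AB by blast
      next
        case False
        hence "{z,w} = {x,y}" using a nA adjE by blast
        hence "z = x \<and> w = y \<or> z = y \<and> w = x" by (auto simp: doubleton_eq_iff)
        thus ?thesis using xy z w DA DB AB x y zB by auto
      qed
    qed
    moreover have "adj EB z w \<Longrightarrow> adj (EA \<union> EB \<union> {{x, y}}) z w" for w using adjE by blast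
    ultimately show ?thesis by blast
  qed
qed

lemma glue_dset:
  assumes AB: "A \<inter> B = {}" and x: "x \<in> A" and y: "y \<in> B"
    and wA: "wfg A EA" and wB: "wfg B EB"
    and DA: "dissociation_set A EA DA" and DB: "dissociation_set B EB DB" and xy: "x \<notin> DA \<or> y \<notin> DB"
  shows "dissociation_set (A \<union> B) (EA \<union> EB \<union> {{x, y}}) (DA \<union> DB)"
proof -
  have sA: "DA \<subseteq> A" and sB: "DB \<subseteq> B" using DA DB by (auto simp: dissociation_set_def)
  note N = glue_nbrs[OF AB x y wA wB sA sB xy]
  show ?thesis unfolding dissociation_set_def
  proof (intro conjI ballI)
    show "DA \<union> DB \<subseteq> A \<union> B" using sA sB by auto
  next
    fix z assume "z \<in> DA \<union> DB"
    thus "card {w \<in> DA \<union> DB. adj (EA \<union> EB \<union> {{x, y}}) z w} \<le> 1"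
      using N DA DB by (auto simp: dissociation_set_def)
  qed
qed

lemma restrict_dset:
  assumes "dissociation_set V E D" "EA \<subseteq> E" "finite V"
  shows "dissociation_set A EA (D \<inter> A)"
  unfolding dissociation_set_def
proof (intro conjI ballI)
  show "D \<inter> A \<subseteq> A" by auto
next
  fix z assume z: "z \<in> D \<inter> A"
  have fD: "finite D" using assms(1,3) by (auto simp: dissociation_set_def intro: finite_subset)
  have "card {w \<in> D \<inter> A. adj EA z w} \<le> card {w \<in> D. adj E z w}"
    using assms(2) fD by (intro card_mono) (auto simp: adj_def)
  also have "\<dots> \<le> 1" using assms(1) z by (auto simp: dissociation_set_def)
  finally show "card {w \<in> D \<inter> A. adj EA z w} \<le> 1" .
qed

definition avoidp :: "'a set \<Rightarrow> 'a set set \<Rightarrow> bool" where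
  "avoidp V E \<longleftrightarrow> (\<forall>u\<in>V. \<exists>D. max_dissociation_set V E D \<and> u \<notin> D)"

lemma glue_diss:
  assumes fA: "finite A" and fB: "finite B" and AB: "A \<inter> B = {}" and x: "x \<in> A" and y: "y \<in> B"
    and wA: "wfg A EA" and wB: "wfg B EB" and avA: "avoidp A EA" and avB: "avoidp B EB"
  shows "diss (A \<union> B) (EA \<union> EB \<union> {{x, y}}) = diss A EA + diss B EB"
    and "avoidp (A \<union> B) (EA \<union> EB \<union> {{x, y}})"
proof -
  let ?E = "EA \<union> EB \<union> {{x, y}}"
  have fU: "finite (A \<union> B)" using fA fB by auto
  have le: "diss (A \<union> B) ?E \<le> diss A EA + diss B EB"
  proof -
    obtain D where D: "dissociation_set (A \<union> B) ?E D" "card D = diss (A \<union> B) ?E"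
      using diss_attained[OF fU] by blast
    have DAB: "D = (D \<inter> A) \<union> (D \<inter> B)" using D(1) by (auto simp: dissociation_set_def)
    have fD: "finite D" using D(1) fU by (auto simp: dissociation_set_def intro: finite_subset)
    have "card D \<le> card (D \<inter> A) + card (D \<inter> B)"
      by (subst DAB) (rule card_Un_le)
    also have "card (D \<inter> A) \<le> diss A EA"
      by (rule diss_ge[OF fA restrict_dset[OF D(1) _ fU]]) auto
    also have "card (D \<inter> B) \<le> diss B EB"
      by (rule diss_ge[OF fB restrict_dset[OF D(1) _ fU]]) auto
    finally show ?thesis using D(2) by simp
  qed
  have main: "\<exists>D. max_dissociation_set (A \<union> B) ?E D \<and> u \<notin> D" if u: "u \<in> A \<union> B" for u
  proof -
    obtain DA DB where DA: "max_dissociation_set A EA DA" and DB: "max_dissociation_set B EB DB"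
      and c: "x \<notin> DA \<or> y \<notin> DB" and uD: "u \<notin> DA \<union> DB"
    proof (cases "u \<in> A")
      case True
      obtain DA where "max_dissociation_set A EA DA" "u \<notin> DA" using avA True by (auto simp: avoidp_def)
      moreover obtain DB where "max_dissociation_set B EB DB" "y \<notin> DB" using avB y by (auto simp: avoidp_def)
      moreover have "u \<notin> DB" using calculation True AB by (auto simp: max_dissociation_set_def dissociation_set_def)
      ultimately show ?thesis using that by blast
    next
      case False
      hence uB: "u \<in> B" using u by auto
      obtain DB where "max_dissociation_set B EB DB" "u \<notin> DB" using avB uB by (auto simp: avoidp_def)
      moreover obtain DA where "max_dissociation_set A EA DA" "x \<notin> DA" using avA x by (auto simp: avoidp_def)
      moreover have "u \<notin> DA" using calculation uB AB by (auto simp: max_dissociation_set_def dissociation_set_def)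
      ultimately show ?thesis using that by blast
    qed
    have ds: "dissociation_set (A \<union> B) ?E (DA \<union> DB)"
      using glue_dset[OF AB x y wA wB _ _ c] DA DB by (auto simp: max_dissociation_set_def)
    have dj: "DA \<inter> DB = {}" using DA DB AB by (auto simp: max_dissociation_set_def dissociation_set_def)
    have fDA: "finite DA" using DA fA by (auto simp: max_dissociation_set_def dissociation_set_def intro: finite_subset)
    have fDB: "finite DB" using DB fB by (auto simp: max_dissociation_set_def dissociation_set_def intro: finite_subset)
    have cc: "card (DA \<union> DB) = diss A EA + diss B EB"
      using card_Un_disjoint[OF fDA fDB dj] DA DB by (simp add: max_dissociation_set_def)
    have "card (DA \<union> DB) \<le> diss (A \<union> B) ?E" by (rule diss_ge[OF fU ds])
    hence "card (DA \<union> DB) = diss (A \<union> B) ?E" using cc le by simp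
    thus ?thesis using ds uD by (auto simp: max_dissociation_set_def)
  qed
  show "avoidp (A \<union> B) ?E" using main by (simp add: avoidp_def)
  show "diss (A \<union> B) ?E = diss A EA + diss B EB"
  proof -
    obtain a where "a \<in> A" using x by blast
    then obtain D where "max_dissociation_set (A \<union> B) ?E D" using main by blast
    hence "dissociation_set (A \<union> B) ?E D" "card D = diss (A \<union> B) ?E" by (auto simp: max_dissociation_set_def)
    obtain DA where DA: "max_dissociation_set A EA DA" and "x \<notin> DA" using avA x by (auto simp: avoidp_def)
    obtain DB where DB: "max_dissociation_set B EB DB" using avB y by (auto simp: avoidp_def)
    have ds: "dissociation_set (A \<union> B) ?E (DA \<union> DB)"
      using glue_dset[OF AB x y wA wB] DA DB \<open>x \<notin> DA\<close> by (auto simp: max_dissociation_set_def)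
    have dj: "DA \<inter> DB = {}" using DA DB AB by (auto simp: max_dissociation_set_def dissociation_set_def)
    have fDA: "finite DA" using DA fA by (auto simp: max_dissociation_set_def dissociation_set_def intro: finite_subset)
    have fDB: "finite DB" using DB fB by (auto simp: max_dissociation_set_def dissociation_set_def intro: finite_subset)
    have "card (DA \<union> DB) = diss A EA + diss B EB"
      using card_Un_disjoint[OF fDA fDB dj] DA DB by (simp add: max_dissociation_set_def)
    moreover have "card (DA \<union> DB) \<le> diss (A \<union> B) ?E" by (rule diss_ge[OF fU ds])
    ultimately show ?thesis using le by simp
  qed
qed


lemma reach_step: "x \<in> V \<Longrightarrow> y \<in> V \<Longrightarrow> adj E x y \<Longrightarrow> reach V E x y"
  unfolding reach_def by (rule r_into_rtranclp) simp

lemma reach_refl: "reach V E x x"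
  unfolding reach_def by simp

lemma reach_trans: "reach V E x y \<Longrightarrow> reach V E y z \<Longrightarrow> reach V E x z"
  unfolding reach_def by (rule rtranclp_trans)

lemma reach_sym: "reach V E x y \<Longrightarrow> reach V E y x"
  unfolding reach_def
proof (induction rule: rtranclp.induct)
  case (rtrancl_refl a) then show ?case by simp
next
  case (rtrancl_into_rtrancl a b c)
  have "(\<lambda>x y. x \<in> V \<and> y \<in> V \<and> adj E x y) c b" using rtrancl_into_rtrancl(2) adj_sym by metis
  thus ?case using rtrancl_into_rtrancl(3) by (rule converse_rtranclp_into_rtranclp)
qed

lemma reach_mono: "V \<subseteq> V' \<Longrightarrow> E \<subseteq> E' \<Longrightarrow> reach V E x y \<Longrightarrow> reach V' E' x y"
  unfolding reach_def
  by (erule rtranclp_mono[THEN predicate2D, rotated]) (auto simp: adj_def)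

definition connected :: "'a set \<Rightarrow> 'a set set \<Rightarrow> bool" where
  "connected V E \<longleftrightarrow> (\<forall>x\<in>V. \<forall>y\<in>V. reach V E x y)"

lemma connected_root: "r \<in> V \<Longrightarrow> (\<forall>x\<in>V. reach V E r x) \<Longrightarrow> connected V E"
  unfolding connected_def by (meson reach_sym reach_trans)

lemma components_conn: "connected V E \<Longrightarrow> V \<noteq> {} \<Longrightarrow> components V E = {V}"
proof -
  assume c: "connected V E" and ne: "V \<noteq> {}"
  have "{y \<in> V. reach V E x y} = V" if "x \<in> V" for x using c that by (auto simp: connected_def)
  thus ?thesis using ne unfolding components_def by auto
qed

lemma cycle_edge_in:
  assumes "is_cycle_graph vs S ES" "i < length vs"
  shows "{vs ! i, vs ! (Suc i mod length vs)} \<in> ES"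
  using assms unfolding is_cycle_graph_def cycle_edges_def by auto

lemma transition:
  fixes P :: "nat \<Rightarrow> bool"
  assumes "a < l" "P a" "b < l" "\<not> P b"
  shows "\<exists>i<l. P i \<and> \<not> P (Suc i mod l)"
proof (rule ccontr)
  assume "\<not> ?thesis"
  hence st: "\<And>i. i < l \<Longrightarrow> P i \<Longrightarrow> P (Suc i mod l)" by blast
  have "P ((a + t) mod l)" for t
  proof (induction t)
    case 0 then show ?case using assms by simp
  next
    case (Suc t)
    have "(a + t) mod l < l" using assms(1) by simp
    hence "P (Suc ((a + t) mod l) mod l)" using st Suc by blast
    moreover have "Suc ((a + t) mod l) mod l = (a + Suc t) mod l" by (simp add: mod_Suc_eq)
    ultimately show ?case by simp
  qed
  hence "P ((a + (b + l - a)) mod l)" by blast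
  moreover have "(a + (b + l - a)) mod l = b" using assms by simp
  ultimately show False using assms by simp
qed

lemma mod_plus2_neq: "(j::nat) < l \<Longrightarrow> 3 \<le> l \<Longrightarrow> (j + 2) mod l \<noteq> j"
proof
  assume a: "j < l" "3 \<le> l" "(j + 2) mod l = j"
  show False
  proof (cases "j + 2 < l")
    case True thus False using a by simp
  next
    case False
    hence "(j + 2) mod l = (j + 2 - l) mod l" by (simp add: le_mod_geq)
    also have "\<dots> = j + 2 - l" using a False by simp
    finally show False using a False by simp
  qed
qed

lemma ics_nonempty: "S \<in> induced_cycle_sets V E \<Longrightarrow> S \<noteq> {}"
  unfolding induced_cycle_sets_def is_cycle_graph_def by auto

lemma edges_in_S_eq:
  assumes "S \<subseteq> A" "A \<inter> B = {}" "x \<in> A" "y \<in> B" "wfg A EA" "wfg B EB"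
  shows "{e \<in> EA \<union> EB \<union> {{x, y}}. e \<subseteq> S} = {e \<in> EA. e \<subseteq> S}"
proof -
  have "e \<in> EB \<Longrightarrow> \<not> e \<subseteq> S" for e
    using assms(1,2,6) unfolding wfg_def by fastforce
  moreover have "\<not> {x,y} \<subseteq> S" using assms by auto
  ultimately show ?thesis by auto
qed

lemma ics_glue:
  assumes AB: "A \<inter> B = {}" and x: "x \<in> A" and y: "y \<in> B" and wA: "wfg A EA" and wB: "wfg B EB"
  shows "induced_cycle_sets (A \<union> B) (EA \<union> EB \<union> {{x, y}}) = induced_cycle_sets A EA \<union> induced_cycle_sets B EB"
proof -
  let ?E = "EA \<union> EB \<union> {{x, y}}"
  have BA: "B \<inter> A = {}" using AB by auto
  have eqA: "S \<subseteq> A \<Longrightarrow> {e \<in> ?E. e \<subseteq> S} = {e \<in> EA. e \<subseteq> S}" for S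
    by (rule edges_in_S_eq[OF _ AB x y wA wB])
  have eqB: "S \<subseteq> B \<Longrightarrow> {e \<in> ?E. e \<subseteq> S} = {e \<in> EB. e \<subseteq> S}" for S
  proof -
    assume "S \<subseteq> B"
    have "?E = EB \<union> EA \<union> {{y, x}}" by (auto simp: insert_commute)
    thus ?thesis using edges_in_S_eq[OF \<open>S \<subseteq> B\<close> BA y x wB wA] by simp
  qed
  have cross: False if S: "S \<subseteq> A \<union> B" and cyc: "is_cycle_graph vs S {e \<in> ?E. e \<subseteq> S}"
      and a: "a \<in> S \<inter> A" and b: "b \<in> S \<inter> B" for S vs a b
  proof -
    let ?l = "length vs"
    have l3: "?l \<ge> 3" and dist: "distinct vs" and Sv: "S = set vs" using cyc by (auto simp: is_cycle_graph_def)
    obtain ia where ia: "ia < ?l" "vs ! ia = a" using a Sv by (metis IntD1 in_set_conv_nth)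
    obtain ib where ib: "ib < ?l" "vs ! ib = b" using b Sv by (metis IntD1 in_set_conv_nth)
    have inAB: "i < ?l \<Longrightarrow> vs ! i \<in> A \<or> vs ! i \<in> B" for i using S Sv by auto
    obtain i where i: "i < ?l" "vs ! i \<in> A" "vs ! (Suc i mod ?l) \<notin> A"
      using transition[of ia ?l "\<lambda>i. vs ! i \<in> A" ib] ia ib a b AB by auto
    obtain j where j: "j < ?l" "vs ! j \<in> B" "vs ! (Suc j mod ?l) \<notin> B"
      using transition[of ib ?l "\<lambda>i. vs ! i \<in> B" ia] ia ib a b AB by auto
    have l0: "0 < ?l" using l3 by linarith
    have si: "Suc i mod ?l < ?l" using l0 by simp
    have sj: "Suc j mod ?l < ?l" using l0 by simp
    have i2: "vs ! (Suc i mod ?l) \<in> B" using inAB[OF si] i by auto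
    have j2: "vs ! (Suc j mod ?l) \<in> A" using inAB[OF sj] j by auto
    have ei: "{vs ! i, vs ! (Suc i mod ?l)} \<in> ?E" using cycle_edge_in[OF cyc i(1)] by auto
    have ej: "{vs ! j, vs ! (Suc j mod ?l)} \<in> ?E" using cycle_edge_in[OF cyc j(1)] by auto
    have "{vs ! i, vs ! (Suc i mod ?l)} \<notin> EA" using wfg_edge_sub[OF wA] i2 AB by blast
    moreover have "{vs ! i, vs ! (Suc i mod ?l)} \<notin> EB" using wfg_edge_sub[OF wB] i(2) AB by blast
    ultimately have "{vs ! i, vs ! (Suc i mod ?l)} = {x, y}" using ei by auto
    hence xi: "vs ! i = x" "vs ! (Suc i mod ?l) = y" using i(2) i2 x y AB by (auto simp: doubleton_eq_iff)
    have "{vs ! j, vs ! (Suc j mod ?l)} \<notin> EA" using wfg_edge_sub[OF wA] j(2) AB by blast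
    moreover have "{vs ! j, vs ! (Suc j mod ?l)} \<notin> EB" using wfg_edge_sub[OF wB] j2 AB by blast
    ultimately have "{vs ! j, vs ! (Suc j mod ?l)} = {x, y}" using ej by auto
    hence yj: "vs ! j = y" "vs ! (Suc j mod ?l) = x" using j(2) j2 x y AB by (auto simp: doubleton_eq_iff)
    have e1: "i = Suc j mod ?l" using xi(1) yj(2) dist i(1) sj nth_eq_iff_index_eq by metis
    have e2: "j = Suc i mod ?l" using xi(2) yj(1) dist j(1) si nth_eq_iff_index_eq by metis
    have "j = Suc (Suc j mod ?l) mod ?l" using e1 e2 by simp
    also have "\<dots> = (j + 2) mod ?l" by (simp add: mod_Suc_eq)
    finally have "(j + 2) mod ?l = j" by simp
    thus False using j(1) l3 mod_plus2_neq by blast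
  qed
  show ?thesis
  proof (intro equalityI subsetI)
    fix S assume S: "S \<in> induced_cycle_sets (A \<union> B) ?E"
    then obtain vs where SS: "S \<subseteq> A \<union> B" and cyc: "is_cycle_graph vs S {e \<in> ?E. e \<subseteq> S}"
      by (auto simp: induced_cycle_sets_def)
    show "S \<in> induced_cycle_sets A EA \<union> induced_cycle_sets B EB"
    proof (cases "S \<subseteq> A")
      case True
      thus ?thesis using cyc eqA[OF True] by (auto simp: induced_cycle_sets_def)
    next
      case False
      show ?thesis
      proof (cases "S \<subseteq> B")
        case True
        thus ?thesis using cyc eqB[OF True] by (auto simp: induced_cycle_sets_def)
      next
        case False2: False
        obtain b where "b \<in> S" "b \<notin> A" using False by auto
        hence b: "b \<in> S \<inter> B" using SS by auto
        obtain a where "a \<in> S" "a \<notin> B" using False2 by auto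
        hence a: "a \<in> S \<inter> A" using SS by auto
        show ?thesis using cross[OF SS cyc a b] by simp
      qed
    qed
  next
    fix S assume "S \<in> induced_cycle_sets A EA \<union> induced_cycle_sets B EB"
    thus "S \<in> induced_cycle_sets (A \<union> B) ?E"
    proof
      assume "S \<in> induced_cycle_sets A EA"
      then obtain vs where "S \<subseteq> A" "is_cycle_graph vs S {e \<in> EA. e \<subseteq> S}" by (auto simp: induced_cycle_sets_def)
      thus ?thesis using eqA[of S] by (auto simp: induced_cycle_sets_def)
    next
      assume "S \<in> induced_cycle_sets B EB"
      then obtain vs where "S \<subseteq> B" "is_cycle_graph vs S {e \<in> EB. e \<subseteq> S}" by (auto simp: induced_cycle_sets_def)
      thus ?thesis using eqB[of S] by (auto simp: induced_cycle_sets_def)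
    qed
  qed
qed


definition c1 :: "'a set \<Rightarrow> 'a set set \<Rightarrow> nat" where
  "c1 V E = card {S \<in> induced_cycle_sets V E. card S mod 3 = 1}"

definition Good :: "'a set \<Rightarrow> 'a set set \<Rightarrow> bool" where
  "Good V E \<longleftrightarrow> finite V \<and> V \<noteq> {} \<and> wfg V E \<and> connected V E
     \<and> 3 * diss V E + card E + 1 + c1 V E = 3 * card V \<and> avoidp V E"

lemma wfg_finite_E: "wfg V E \<Longrightarrow> finite V \<Longrightarrow> finite E"
  by (metis Pow_iff finite_Pow_iff rev_finite_subset subsetI wfg_edge_sub)

lemma wfg_edge_ne: "wfg V E \<Longrightarrow> e \<in> E \<Longrightarrow> e \<noteq> {}"
  unfolding wfg_def by auto

lemma ics_finite: "finite V \<Longrightarrow> finite (induced_cycle_sets V E)"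
  unfolding induced_cycle_sets_def
  by (rule finite_subset[of _ "Pow V"]) auto

lemma Good_glue:
  assumes GA: "Good A EA" and GB: "Good B EB" and AB: "A \<inter> B = {}" and x: "x \<in> A" and y: "y \<in> B"
  shows "Good (A \<union> B) (EA \<union> EB \<union> {{x, y}})"
proof -
  let ?E = "EA \<union> EB \<union> {{x, y}}"
  have fA: "finite A" and wA: "wfg A EA" and cA: "connected A EA" and avA: "avoidp A EA"
    and eA: "3 * diss A EA + card EA + 1 + c1 A EA = 3 * card A" using GA by (auto simp: Good_def)
  have fB: "finite B" and wB: "wfg B EB" and cB: "connected B EB" and avB: "avoidp B EB"
    and eB: "3 * diss B EB + card EB + 1 + c1 B EB = 3 * card B" using GB by (auto simp: Good_def)
  have d: "diss (A \<union> B) ?E = diss A EA + diss B EB" and av: "avoidp (A \<union> B) ?E"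
    using glue_diss[OF fA fB AB x y wA wB avA avB] by auto
  have w: "wfg (A \<union> B) ?E"
    unfolding wfg_def
  proof
    fix e assume "e \<in> ?E"
    moreover have "x \<noteq> y" using x y AB by auto
    moreover have "e \<in> EA \<Longrightarrow> \<exists>a b. a \<noteq> b \<and> a \<in> A \<union> B \<and> b \<in> A \<union> B \<and> e = {a, b}"
      using wA unfolding wfg_def by (meson UnCI)
    moreover have "e \<in> EB \<Longrightarrow> \<exists>a b. a \<noteq> b \<and> a \<in> A \<union> B \<and> b \<in> A \<union> B \<and> e = {a, b}"
      using wB unfolding wfg_def by (meson UnCI)
    ultimately show "\<exists>a b. a \<noteq> b \<and> a \<in> A \<union> B \<and> b \<in> A \<union> B \<and> e = {a, b}"
      using x y by blast
  qed
  have conn: "connected (A \<union> B) ?E"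
  proof (rule connected_root[of x])
    show "x \<in> A \<union> B" using x by simp
    show "\<forall>z\<in>A \<union> B. reach (A \<union> B) ?E x z"
    proof
      fix z assume z: "z \<in> A \<union> B"
      show "reach (A \<union> B) ?E x z"
      proof (cases "z \<in> A")
        case True
        thus ?thesis using cA x reach_mono[of A "A \<union> B" EA ?E x z] by (auto simp: connected_def)
      next
        case False
        hence zB: "z \<in> B" using z by simp
        have r1: "reach (A \<union> B) ?E x y" using x y by (intro reach_step) (auto simp: adj_def)
        have "reach (A \<union> B) ?E y z" using cB y zB reach_mono[of B "A \<union> B" EB ?E y z] by (auto simp: connected_def)
        thus ?thesis using r1 reach_trans by metis
      qed
    qed
  qed
  have fEA: "finite EA" using wfg_finite_E[OF wA fA] .
  have fEB: "finite EB" using wfg_finite_E[OF wB fB] .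
  have dj: "EA \<inter> EB = {}"
  proof -
    have "e \<in> EA \<Longrightarrow> e \<in> EB \<Longrightarrow> False" for e
    proof -
      assume "e \<in> EA" "e \<in> EB"
      hence "e \<subseteq> A \<inter> B" "e \<noteq> {}" using wfg_edge_sub[OF wA] wfg_edge_sub[OF wB] wfg_edge_ne[OF wA] by auto
      thus False using AB by auto
    qed
    thus ?thesis by blast
  qed
  have nxy: "{x, y} \<notin> EA \<union> EB" using wfg_edge_sub[OF wA] wfg_edge_sub[OF wB] x y AB by blast
  have cE: "card ?E = card EA + card EB + 1"
  proof -
    have "card ?E = card (EA \<union> EB) + 1" using nxy fEA fEB by (simp add: Un_insert_right)
    thus ?thesis using card_Un_disjoint[OF fEA fEB dj] by simp
  qed
  have cV: "card (A \<union> B) = card A + card B" using card_Un_disjoint[OF fA fB AB] .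
  have ccyc: "c1 (A \<union> B) ?E = c1 A EA + c1 B EB"
  proof -
    have eq: "{S \<in> induced_cycle_sets (A \<union> B) ?E. card S mod 3 = 1} =
      {S \<in> induced_cycle_sets A EA. card S mod 3 = 1} \<union> {S \<in> induced_cycle_sets B EB. card S mod 3 = 1}"
      using ics_glue[OF AB x y wA wB] by auto
    have dj2: "induced_cycle_sets A EA \<inter> induced_cycle_sets B EB = {}"
    proof -
      have "S \<in> induced_cycle_sets A EA \<Longrightarrow> S \<in> induced_cycle_sets B EB \<Longrightarrow> False" for S
        using ics_nonempty[of S A EA] AB by (auto simp: induced_cycle_sets_def)
      thus ?thesis by blast
    qed
    show ?thesis unfolding c1_def eq
      by (rule card_Un_disjoint) (use ics_finite[OF fA] ics_finite[OF fB] dj2 in auto)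
  qed
  show ?thesis unfolding Good_def
    using fA fB w conn av d cE cV ccyc eA eB x by auto
qed


definition scyc :: "'a list \<Rightarrow> nat set \<Rightarrow> (nat \<Rightarrow> 'a) \<Rightarrow> 'a set \<Rightarrow> 'a set set \<Rightarrow> bool" where
  "scyc us I sp V E \<longleftrightarrow> 3 \<le> length us \<and> distinct us \<and> I \<subseteq> {..<length us} \<and> inj_on sp I \<and>
     sp ` I \<inter> set us = {} \<and> V = set us \<union> sp ` I \<and>
     E = cycle_edges us \<union> {{us ! i, sp i} | i. i \<in> I}"

lemma pred_idx:
  assumes "i < l" "Suc i mod l = a"
  shows "i = (a + l - 1) mod l"
proof (cases "Suc i < l")
  case True
  hence "a = Suc i" using assms by simp
  thus ?thesis using assms by simp
next
  case False
  hence "Suc i = l" using assms by simp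
  hence "a = 0" using assms by simp
  thus ?thesis using \<open>Suc i = l\<close> by simp
qed

lemma suc_pred_idx: "a < (l::nat) \<Longrightarrow> Suc ((a + l - 1) mod l) mod l = a"
proof (cases a)
  case 0
  assume "a < l" thus ?thesis using 0 by (simp add: mod_Suc_eq)
next
  case (Suc b)
  assume "a < l"
  hence "(a + l - 1) mod l = b" using Suc by simp
  thus ?thesis using Suc \<open>a < l\<close> by simp
qed

lemma pred_idx_lt: "0 < (l::nat) \<Longrightarrow> (a + l - 1) mod l < l" by simp

lemma two_nbrs:
  assumes cyc: "is_cycle_graph vs S ES" and sub: "ES \<subseteq> E" and z: "z \<in> S"
  shows "\<exists>y w. y \<in> S \<and> w \<in> S \<and> y \<noteq> w \<and> adj E z y \<and> adj E z w"
proof -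
  let ?l = "length vs"
  have l3: "?l \<ge> 3" and dist: "distinct vs" and Sv: "S = set vs" using cyc by (auto simp: is_cycle_graph_def)
  have l0: "0 < ?l" using l3 by linarith
  obtain i where i: "i < ?l" "vs ! i = z" using z Sv by (metis in_set_conv_nth)
  define p where "p = (i + ?l - 1) mod ?l"
  have p: "p < ?l" using l0 by (simp add: p_def)
  have sp: "Suc p mod ?l = i" unfolding p_def by (rule suc_pred_idx[OF i(1)])
  have e1: "{vs ! i, vs ! (Suc i mod ?l)} \<in> E" using cycle_edge_in[OF cyc i(1)] sub by auto
  have e2: "{vs ! p, vs ! (Suc p mod ?l)} \<in> E" using cycle_edge_in[OF cyc p] sub by auto
  have si: "Suc i mod ?l < ?l" using l0 by simp
  have ne: "Suc i mod ?l \<noteq> p"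
  proof
    assume "Suc i mod ?l = p"
    hence "Suc (Suc i mod ?l) mod ?l = i" using sp by simp
    hence "(i + 2) mod ?l = i" by (simp add: mod_Suc_eq)
    thus False using mod_plus2_neq[OF i(1) l3] by simp
  qed
  have "vs ! (Suc i mod ?l) \<noteq> vs ! p" using ne dist si p nth_eq_iff_index_eq by metis
  moreover have "adj E z (vs ! (Suc i mod ?l))" using e1 i by (simp add: adj_def)
  moreover have "adj E z (vs ! p)" using e2 i sp by (simp add: adj_def insert_commute)
  moreover have "vs ! (Suc i mod ?l) \<in> S" "vs ! p \<in> S" using Sv si p by auto
  ultimately show ?thesis by blast
qed

context
  fixes us I sp V E
  assumes sc: "scyc us I sp V E"
begin

abbreviation "L \<equiv> length us"

lemma sc_l3: "3 \<le> L" using sc by (simp add: scyc_def)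
lemma sc_l0: "0 < L" using sc_l3 by linarith
lemma sc_dist: "distinct us" using sc by (simp add: scyc_def)
lemma sc_I: "I \<subseteq> {..<L}" using sc by (simp add: scyc_def)
lemma sc_inj: "inj_on sp I" using sc by (simp add: scyc_def)
lemma sc_disj: "i \<in> I \<Longrightarrow> sp i \<notin> set us" using sc by (auto simp: scyc_def)
lemma sc_V: "V = set us \<union> sp ` I" using sc by (simp add: scyc_def)
lemma sc_E: "E = cycle_edges us \<union> {{us ! i, sp i} | i. i \<in> I}" using sc by (simp add: scyc_def)

lemma sc_nth_eq: "a < L \<Longrightarrow> b < L \<Longrightarrow> us ! a = us ! b \<longleftrightarrow> a = b"
  using sc_dist nth_eq_iff_index_eq by metis

lemma sc_nth_sp: "a < L \<Longrightarrow> i \<in> I \<Longrightarrow> us ! a \<noteq> sp i"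
  using sc_disj by (metis nth_mem)

lemma sc_adj: "adj E a b \<longleftrightarrow> (\<exists>i<L. {a, b} = {us ! i, us ! (Suc i mod L)}) \<or> (\<exists>i\<in>I. {a, b} = {us ! i, sp i})"
  unfolding adj_def sc_E cycle_edges_def by blast

lemma sc_adj_cyc: "i < L \<Longrightarrow> adj E (us ! i) (us ! (Suc i mod L))"
  using sc_adj by blast

lemma sc_adj_sp: "i \<in> I \<Longrightarrow> adj E (us ! i) (sp i)"
  using sc_adj by blast

lemma sc_nbr_sp: assumes "i \<in> I" "adj E (sp i) b" shows "b = us ! i"
proof -
  have iI: "i < L" using assms sc_I by auto
  from assms(2)[unfolded sc_adj] show ?thesis
  proof
    assume "\<exists>j<L. {sp i, b} = {us ! j, us ! (Suc j mod L)}"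
    then obtain j where j: "j < L" "{sp i, b} = {us ! j, us ! (Suc j mod L)}" by blast
    have "Suc j mod L < L" using sc_l0 by simp
    hence "{us ! j, us ! (Suc j mod L)} \<subseteq> set us" using j(1) by simp
    hence "sp i \<in> set us" using j(2) by blast
    thus ?thesis using sc_disj assms by blast
  next
    assume "\<exists>j\<in>I. {sp i, b} = {us ! j, sp j}"
    then obtain j where j: "j \<in> I" "{sp i, b} = {us ! j, sp j}" by blast
    have jl: "j < L" using j sc_I by auto
    show ?thesis
    proof (cases "sp i = us ! j")
      case True thus ?thesis using sc_nth_sp[OF jl assms(1)] by simp
    next
      case False
      hence "sp i = sp j" "b = us ! j" using j(2) by (auto simp: doubleton_eq_iff)
      thus ?thesis using sc_inj assms(1) j(1) by (metis inj_onD)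
    qed
  qed
qed

lemma sc_nbr_us:
  assumes a: "a < L" and ad: "adj E (us ! a) b"
  shows "b = us ! (Suc a mod L) \<or> b = us ! ((a + L - 1) mod L) \<or> (a \<in> I \<and> b = sp a)"
proof -
  from ad[unfolded sc_adj] show ?thesis
  proof
    assume "\<exists>j<L. {us ! a, b} = {us ! j, us ! (Suc j mod L)}"
    then obtain j where j: "j < L" "{us ! a, b} = {us ! j, us ! (Suc j mod L)}" by blast
    have sj: "Suc j mod L < L" using sc_l0 by simp
    show ?thesis
    proof (cases "us ! a = us ! j")
      case True
      hence "a = j" using sc_nth_eq a j by simp
      thus ?thesis using j(2) True by (auto simp: doubleton_eq_iff)
    next
      case False
      hence "us ! a = us ! (Suc j mod L)" "b = us ! j" using j(2) by (auto simp: doubleton_eq_iff)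
      hence "a = Suc j mod L" using sc_nth_eq a sj by simp
      hence "j = (a + L - 1) mod L" using pred_idx j(1) by simp
      thus ?thesis using \<open>b = us ! j\<close> by simp
    qed
  next
    assume "\<exists>j\<in>I. {us ! a, b} = {us ! j, sp j}"
    then obtain j where j: "j \<in> I" "{us ! a, b} = {us ! j, sp j}" by blast
    have jl: "j < L" using j sc_I by auto
    show ?thesis
    proof (cases "us ! a = us ! j")
      case True
      hence "a = j" using sc_nth_eq a jl by simp
      thus ?thesis using j True by (auto simp: doubleton_eq_iff)
    next
      case False
      hence "us ! a = sp j" using j(2) by (auto simp: doubleton_eq_iff)
      thus ?thesis using sc_nth_sp[OF a j(1)] by simp
    qed
  qed
qed

lemma sc_finI: "finite I" using sc_I finite_subset by blast

lemma sc_finite: "finite V" using sc_V sc_finI by simp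

lemma sc_ne: "V \<noteq> {}" using sc_V sc_l3 by auto

lemma sc_wfg: "wfg V E"
  unfolding wfg_def
proof
  fix e assume "e \<in> E"
  hence "(\<exists>i<L. e = {us ! i, us ! (Suc i mod L)}) \<or> (\<exists>i\<in>I. e = {us ! i, sp i})"
    unfolding sc_E cycle_edges_def by blast
  thus "\<exists>a b. a \<noteq> b \<and> a \<in> V \<and> b \<in> V \<and> e = {a, b}"
  proof
    assume "\<exists>i<L. e = {us ! i, us ! (Suc i mod L)}"
    then obtain i where i: "i < L" "e = {us ! i, us ! (Suc i mod L)}" by blast
    have si: "Suc i mod L < L" using sc_l0 by simp
    have "Suc i mod L \<noteq> i"
    proof
      assume a1: "Suc i mod L = i"
      have "Suc (Suc i mod L) mod L = (i + 2) mod L" by (simp add: mod_Suc_eq)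
      hence "(i + 2) mod L = i" using a1 by simp
      thus False using mod_plus2_neq[OF i(1) sc_l3] by simp
    qed
    hence "us ! i \<noteq> us ! (Suc i mod L)" using sc_nth_eq i(1) si by simp
    thus ?thesis using i si sc_V by (intro exI[of _ "us ! i"] exI[of _ "us ! (Suc i mod L)"]) auto
  next
    assume "\<exists>i\<in>I. e = {us ! i, sp i}"
    then obtain i where i: "i \<in> I" "e = {us ! i, sp i}" by blast
    have il: "i < L" using i sc_I by auto
    thus ?thesis using i sc_nth_sp[OF il i(1)] sc_V by (intro exI[of _ "us ! i"] exI[of _ "sp i"]) auto
  qed
qed

lemma sc_connected: "connected V E"
proof (rule connected_root[of "us ! 0"])
  show "us ! 0 \<in> V" using sc_V sc_l0 by auto
  have r: "reach V E (us ! 0) (us ! j)" if "j < L" for j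
    using that
  proof (induction j)
    case 0 then show ?case by (simp add: reach_refl)
  next
    case (Suc j)
    have jl: "j < L" using Suc.prems by simp
    have "adj E (us ! j) (us ! (Suc j mod L))" using sc_adj_cyc[OF jl] .
    moreover have "Suc j mod L = Suc j" using Suc.prems by simp
    ultimately have "adj E (us ! j) (us ! Suc j)" by simp
    hence "reach V E (us ! j) (us ! Suc j)" using Suc sc_V by (intro reach_step) auto
    thus ?case using Suc reach_trans by fastforce
  qed
  show "\<forall>x\<in>V. reach V E (us ! 0) x"
  proof
    fix x assume "x \<in> V"
    hence "x \<in> set us \<or> (\<exists>i\<in>I. x = sp i)" using sc_V by auto
    thus "reach V E (us ! 0) x"
    proof
      assume "x \<in> set us" thus ?thesis using r by (metis in_set_conv_nth)
    next
      assume "\<exists>i\<in>I. x = sp i"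
      then obtain i where i: "i \<in> I" "x = sp i" by blast
      have il: "i < L" using i sc_I by auto
      have "reach V E (us ! i) (sp i)" using sc_adj_sp[OF i(1)] sc_V il i by (intro reach_step) auto
      thus ?thesis using r[OF il] i reach_trans by metis
    qed
  qed
qed

lemma sc_cardV: "card V = L + card I"
proof -
  have "card (sp ` I) = card I" using sc_inj by (rule card_image)
  moreover have "card (set us) = L" using sc_dist by (rule distinct_card)
  moreover have "finite I" using sc_I finite_subset by blast
  ultimately show ?thesis using sc_V sc sc_disj card_Un_disjoint[of "set us" "sp ` I"]
    by (auto simp: scyc_def)
qed

lemma sc_card_cyc: "card (cycle_edges us) = L"
proof -
  have ce: "cycle_edges us = (\<lambda>i. {us ! i, us ! (Suc i mod L)}) ` {..<L}"
    unfolding cycle_edges_def by auto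
  have "inj_on (\<lambda>i. {us ! i, us ! (Suc i mod L)}) {..<L}"
  proof (rule inj_onI)
    fix i j assume i: "i \<in> {..<L}" and j: "j \<in> {..<L}" and eq: "{us ! i, us ! (Suc i mod L)} = {us ! j, us ! (Suc j mod L)}"
    have si: "Suc i mod L < L" and sj: "Suc j mod L < L" using sc_l0 by auto
    show "i = j"
    proof (cases "us ! i = us ! j")
      case True thus ?thesis using sc_nth_eq i j by simp
    next
      case False
      hence "us ! i = us ! (Suc j mod L)" "us ! (Suc i mod L) = us ! j" using eq by (auto simp: doubleton_eq_iff)
      hence "i = Suc j mod L" "Suc i mod L = j" using sc_nth_eq i j si sj by auto
      hence "(j + 2) mod L = j" by (simp add: mod_Suc_eq)
      thus ?thesis using mod_plus2_neq[of j L] j sc_l3 by simp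
    qed
  qed
  thus ?thesis using ce card_image by fastforce
qed

lemma sc_cardE: "card E = L + card I"
proof -
  have fI: "finite I" using sc_I finite_subset by blast
  have sp_e: "{{us ! i, sp i} | i. i \<in> I} = (\<lambda>i. {us ! i, sp i}) ` I" by auto
  have inj: "inj_on (\<lambda>i. {us ! i, sp i}) I"
  proof (rule inj_onI)
    fix i j assume i: "i \<in> I" and j: "j \<in> I" and eq: "{us ! i, sp i} = {us ! j, sp j}"
    have il: "i < L" and jl: "j < L" using i j sc_I by auto
    have "us ! i = us ! j" using eq sc_nth_sp[OF il j] by (auto simp: doubleton_eq_iff)
    thus "i = j" using sc_nth_eq il jl by simp
  qed
  have dj: "cycle_edges us \<inter> {{us ! i, sp i} | i. i \<in> I} = {}"
  proof -
    have "e \<in> cycle_edges us \<Longrightarrow> e \<subseteq> set us" for e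
      unfolding cycle_edges_def using sc_l0 by auto
    moreover have "e \<in> {{us ! i, sp i} | i. i \<in> I} \<Longrightarrow> \<not> e \<subseteq> set us" for e
      using sc_disj by auto
    ultimately show ?thesis by blast
  qed
  have fc: "finite (cycle_edges us)" unfolding cycle_edges_def by simp
  show ?thesis
    using card_Un_disjoint[OF fc _ dj] sc_card_cyc card_image[OF inj] sp_e fI sc_E by simp
qed

lemma sc_ics: "induced_cycle_sets V E = {set us}"
proof (intro equalityI subsetI)
  fix S assume "S \<in> induced_cycle_sets V E"
  then obtain vs where SV: "S \<subseteq> V" and cyc: "is_cycle_graph vs S {e \<in> E. e \<subseteq> S}"
    by (auto simp: induced_cycle_sets_def)
  note tn = two_nbrs[OF cyc, of E]
  have nosp: "i \<in> I \<Longrightarrow> sp i \<notin> S" for i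
  proof
    assume i: "i \<in> I" "sp i \<in> S"
    then obtain y w where "y \<noteq> w" "adj E (sp i) y" "adj E (sp i) w" using tn by blast
    thus False using sc_nbr_sp i(1) by blast
  qed
  hence Sus: "S \<subseteq> set us" using SV sc_V by auto
  have ne: "S \<noteq> {}" using cyc by (auto simp: is_cycle_graph_def)
  then obtain z where "z \<in> S" by blast
  then obtain a where a: "a < L" "us ! a \<in> S" using Sus by (metis in_set_conv_nth subsetD)
  have clo: "us ! (Suc i mod L) \<in> S" if i: "i < L" "us ! i \<in> S" for i
  proof (rule ccontr)
    assume nS: "us ! (Suc i mod L) \<notin> S"
    obtain y w where yw: "y \<in> S" "w \<in> S" "y \<noteq> w" "adj E (us ! i) y" "adj E (us ! i) w" using tn i(2) by blast
    have "y = us ! ((i + L - 1) mod L)" using sc_nbr_us[OF i(1) yw(4)] nS yw(1) nosp by blast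
    moreover have "w = us ! ((i + L - 1) mod L)" using sc_nbr_us[OF i(1) yw(5)] nS yw(2) nosp by blast
    ultimately show False using yw(3) by simp
  qed
  have "set us \<subseteq> S"
  proof
    fix x assume "x \<in> set us"
    then obtain b where b: "b < L" "us ! b = x" by (metis in_set_conv_nth)
    show "x \<in> S"
    proof (rule ccontr)
      assume "x \<notin> S"
      then obtain i where "i < L" "us ! i \<in> S" "us ! (Suc i mod L) \<notin> S"
        using transition[of a L "\<lambda>i. us ! i \<in> S" b] a b by auto
      thus False using clo by blast
    qed
  qed
  thus "S \<in> {set us}" using Sus by auto
next
  fix S assume "S \<in> {set us}"
  hence S: "S = set us" by simp
  have "{e \<in> E. e \<subseteq> set us} = cycle_edges us"
  proof -
    have "e \<in> cycle_edges us \<Longrightarrow> e \<subseteq> set us" for e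
      unfolding cycle_edges_def using sc_l0 by auto
    moreover have "e \<in> {{us ! i, sp i} | i. i \<in> I} \<Longrightarrow> \<not> e \<subseteq> set us" for e
      using sc_disj by auto
    ultimately show ?thesis using sc_E by auto
  qed
  moreover have "is_cycle_graph us (set us) (cycle_edges us)"
    using sc_l3 sc_dist by (simp add: is_cycle_graph_def)
  ultimately show "S \<in> induced_cycle_sets V E"
    using S sc_V by (auto simp: induced_cycle_sets_def)
qed

lemma sc_c1: "c1 V E = (if L mod 3 = 1 then 1 else 0)"
proof -
  have "{S \<in> {set us}. card S mod 3 = 1} = (if L mod 3 = 1 then {set us} else {})"
    using distinct_card[OF sc_dist] by auto
  thus ?thesis unfolding c1_def sc_ics by simp
qed

end


fun bverts :: "('a \<times> 'a option) list \<Rightarrow> 'a list" where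
  "bverts [] = []"
| "bverts ((w, None) # bs) = w # bverts bs"
| "bverts ((w, Some x) # bs) = w # x # bverts bs"

fun AE :: "('a \<times> 'a option) list \<Rightarrow> 'a set set" where
  "AE [] = {}"
| "AE ((w, xo) # bs) = (case xo of None \<Rightarrow> {} | Some x \<Rightarrow> {{w, x}}) \<union>
     (if bs = [] then {} else {{w, fst (hd bs)}}) \<union> AE bs"

definition cond :: "'a set set \<Rightarrow> ('a \<times> 'a option) list \<Rightarrow> bool" where
  "cond E bs \<longleftrightarrow> (\<forall>a\<in>set (bverts bs). \<forall>b\<in>set (bverts bs). adj E a b \<longrightarrow> {a, b} \<in> AE bs)"

lemma bverts_append: "bverts (xs @ ys) = bverts xs @ bverts ys"
  by (induction xs rule: bverts.induct) auto

lemma hd_in_bverts: "bs \<noteq> [] \<Longrightarrow> fst (hd bs) \<in> set (bverts bs)"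
  by (cases bs rule: bverts.cases) auto

lemma AE_sub: "e \<in> AE bs \<Longrightarrow> e \<subseteq> set (bverts bs)"
proof (induction bs rule: bverts.induct)
  case 1 then show ?case by simp
next
  case (2 w bs) then show ?case using hd_in_bverts[of bs] by (auto split: if_splits)
next
  case (3 w x bs) then show ?case using hd_in_bverts[of bs] by (auto split: if_splits)
qed

lemma AE_two: "distinct (bverts bs) \<Longrightarrow> e \<in> AE bs \<Longrightarrow> \<exists>a b. a \<noteq> b \<and> e = {a, b}"
proof (induction bs rule: bverts.induct)
  case 1 then show ?case by simp
next
  case (2 w bs)
  show ?case
  proof (cases "e \<in> AE bs")
    case True thus ?thesis using 2 by simp
  next
    case False
    hence "e = {w, fst (hd bs)}" "bs \<noteq> []" using 2(3) by (auto split: if_splits)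
    moreover have "w \<noteq> fst (hd bs)" using 2(2) hd_in_bverts[OF \<open>bs \<noteq> []\<close>] by auto
    ultimately show ?thesis by blast
  qed
next
  case (3 w x bs)
  show ?case
  proof (cases "e \<in> AE bs")
    case True thus ?thesis using 3 by simp
  next
    case False
    hence "e = {w, x} \<or> (e = {w, fst (hd bs)} \<and> bs \<noteq> [])" using 3(3) by (auto split: if_splits)
    thus ?thesis
    proof
      assume "e = {w, x}" thus ?thesis using 3(2) by auto
    next
      assume h: "e = {w, fst (hd bs)} \<and> bs \<noteq> []"
      have "w \<noteq> fst (hd bs)" using 3(2) hd_in_bverts h by auto
      thus ?thesis using h by blast
    qed
  qed
qed

lemma AE_append_rest:
  "distinct (bverts (pre @ rest)) \<Longrightarrow> e \<in> AE (pre @ rest) \<Longrightarrow> e \<subseteq> set (bverts rest) \<Longrightarrow> e \<in> AE rest"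
proof (induction pre rule: bverts.induct)
  case 1 then show ?case by simp
next
  case (2 w bs)
  have "w \<notin> set (bverts rest)" using 2(2) by (simp add: bverts_append)
  hence "w \<notin> e" using 2(4) by blast
  thus ?case using 2 by (auto split: if_splits)
next
  case (3 w x bs)
  have "w \<notin> set (bverts rest)" using 3(2) by (simp add: bverts_append)
  hence "w \<notin> e" using 3(4) by blast
  thus ?case using 3 by (auto split: if_splits)
qed

lemma cond_rest: "distinct (bverts (pre @ rest)) \<Longrightarrow> cond E (pre @ rest) \<Longrightarrow> cond E rest"
  unfolding cond_def using AE_append_rest by (fastforce simp: bverts_append)

lemma cond_noloop: "distinct (bverts bs) \<Longrightarrow> cond E bs \<Longrightarrow> a \<in> set (bverts bs) \<Longrightarrow> \<not> adj E a a"
  unfolding cond_def using AE_two by fastforce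

lemma dfree_empty: "dfree E {}" by (simp add: dfree_def)

lemma dfree1: "\<not> adj E a a \<Longrightarrow> dfree E {a}"
  unfolding dfree_def
proof
  fix x assume "x \<in> {a}"
  have "card {y \<in> {a}. adj E x y} \<le> card {a}" by (rule card_mono) auto
  thus "card {y \<in> {a}. adj E x y} \<le> 1" by simp
qed

lemma dfree2: "\<not> adj E a a \<Longrightarrow> \<not> adj E b b \<Longrightarrow> dfree E {a, b}"
  unfolding dfree_def
proof
  fix z assume "\<not> adj E a a" "\<not> adj E b b" "z \<in> {a, b}"
  hence "{y \<in> {a, b}. adj E z y} \<subseteq> {a, b} - {z}" by auto
  moreover have "card ({a, b} - {z}) \<le> 1" using \<open>z \<in> {a,b}\<close> by (cases "a = b") auto
  ultimately show "card {y \<in> {a, b}. adj E z y} \<le> 1" by (meson card_mono finite_Diff finite.insertI finite.emptyI order_trans)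
qed

lemma dfree3: "\<not> adj E a a \<Longrightarrow> \<not> adj E b b \<Longrightarrow> \<not> adj E c c \<Longrightarrow> \<not> adj E a c \<Longrightarrow> \<not> adj E b c \<Longrightarrow> dfree E {a, b, c}"
  unfolding dfree_def
proof
  fix z assume h: "\<not> adj E a a" "\<not> adj E b b" "\<not> adj E c c" "\<not> adj E a c" "\<not> adj E b c" "z \<in> {a, b, c}"
  have sym: "\<not> adj E c a" "\<not> adj E c b" using h adj_sym by metis+
  have "{y \<in> {a, b, c}. adj E z y} \<subseteq> (if z = c then {} else {a, b} - {z})"
    using h sym by auto
  moreover have "card (if z = c then {} else {a, b} - {z}) \<le> 1" using h(6) by (cases "a = b") auto
  ultimately show "card {y \<in> {a, b, c}. adj E z y} \<le> 1"
    by (smt (verit) card_mono finite.emptyI finite.insertI finite_Diff order_trans)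
qed

lemma peel:
  assumes dist: "distinct (bverts (pre @ rest))" and cd: "cond E (pre @ rest)"
    and S: "S \<subseteq> set (bverts pre)" "dfree E S"
    and nocross: "\<forall>a\<in>S. \<forall>c\<in>set (bverts rest). {a, c} \<notin> AE (pre @ rest)"
    and IH: "cond E rest \<Longrightarrow> \<exists>D' \<subseteq> set (bverts rest). dfree E D' \<and> 2 * length (bverts rest) \<le> 3 * card D'"
    and cnt: "2 * length (bverts pre) \<le> 3 * card S"
  shows "\<exists>D \<subseteq> set (bverts (pre @ rest)). dfree E D \<and> 2 * length (bverts (pre @ rest)) \<le> 3 * card D"
proof -
  obtain D' where D': "D' \<subseteq> set (bverts rest)" "dfree E D'" "2 * length (bverts rest) \<le> 3 * card D'"
    using IH cond_rest[OF dist cd] by blast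
  have dj: "S \<inter> D' = {}" using S(1) D'(1) dist by (auto simp: bverts_append)
  have noadj: "\<forall>a\<in>S. \<forall>b\<in>D'. \<not> adj E a b"
  proof (intro ballI notI)
    fix a b assume a: "a \<in> S" and b: "b \<in> D'" and ad: "adj E a b"
    have "{a, b} \<in> AE (pre @ rest)" using cd ad a b S(1) D'(1) unfolding cond_def by (auto simp: bverts_append)
    thus False using nocross a b D'(1) by blast
  qed
  have df: "dfree E (S \<union> D')" by (rule dfree_union[OF S(2) D'(2) noadj])
  have "card (S \<union> D') = card S + card D'"
  proof (rule card_Un_disjoint)
    show "finite S" by (rule finite_subset[OF S(1)]) simp
    show "finite D'" by (rule finite_subset[OF D'(1)]) simp
    show "S \<inter> D' = {}" by (rule dj)
  qed
  moreover have "length (bverts (pre @ rest)) = length (bverts pre) + length (bverts rest)"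
    by (simp add: bverts_append)
  ultimately show ?thesis using df cnt D' S(1) by (intro exI[of _ "S \<union> D'"]) (auto simp: bverts_append)
qed

fun pk :: "('a \<times> 'a option) list \<Rightarrow> bool" where
  "pk [] = True"
| "pk [(w, None)] = True"
| "pk [(w, Some x)] = True"
| "pk [(w1, None), (w2, None)] = True"
| "pk ((w1, None) # (w2, None) # (w3, None) # r) = pk r"
| "pk ((w1, None) # (w2, None) # (w3, Some x3) # r) = pk r"
| "pk ((w1, None) # (w2, Some x2) # r) = pk r"
| "pk ((w1, Some x1) # (w2, None) # r) = pk r"
| "pk ((w1, Some x1) # (w2, Some x2) # r) = pk r"

lemma caterpillar:
  "distinct (bverts bs) \<Longrightarrow> cond E bs \<Longrightarrow>
    \<exists>D \<subseteq> set (bverts bs). dfree E D \<and> 2 * length (bverts bs) \<le> 3 * card D"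
proof (induction bs rule: pk.induct)
  case 1 then show ?case using dfree_empty by auto
next
  case (2 w)
  have "\<not> adj E w w" using cond_noloop[OF 2(1,2)] by simp
  thus ?case using dfree1 by (intro exI[of _ "{w}"]) auto
next
  case (3 w x)
  have "\<not> adj E w w" "\<not> adj E x x" using cond_noloop[OF 3(1,2)] by auto
  thus ?case using dfree2 3(1) by (intro exI[of _ "{w, x}"]) auto
next
  case (4 w1 w2)
  have "\<not> adj E w1 w1" "\<not> adj E w2 w2" using cond_noloop[OF 4(1,2)] by auto
  thus ?case using dfree2 4(1) by (intro exI[of _ "{w1, w2}"]) auto
next
  case (5 w1 w2 w3 r)
  let ?pre = "[(w1, None), (w2, None), (w3, None)]"
  have eq: "(w1, None) # (w2, None) # (w3, None) # r = ?pre @ r" by simp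
  note d = 5(2)[unfolded eq] and c = 5(3)[unfolded eq]
  have nl: "\<not> adj E w1 w1" "\<not> adj E w2 w2" using cond_noloop[OF d c] by (auto simp: bverts_append)
  show ?case unfolding eq
  proof (rule peel[OF d c _ dfree2[OF nl]])
    show "{w1, w2} \<subseteq> set (bverts ?pre)" by simp
    show "\<forall>a\<in>{w1, w2}. \<forall>c\<in>set (bverts r). {a, c} \<notin> AE (?pre @ r)"
      using d AE_sub[of _ r] hd_in_bverts[of r] by (auto simp: bverts_append doubleton_eq_iff)
    show "cond E r \<Longrightarrow> \<exists>D'\<subseteq>set (bverts r). dfree E D' \<and> 2 * length (bverts r) \<le> 3 * card D'"
      using 5(1) d by (simp add: bverts_append)
    show "2 * length (bverts ?pre) \<le> 3 * card {w1, w2}" using d by (auto simp: card_insert_if)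
  qed
next
  case (6 w1 w2 w3 x3 r)
  let ?pre = "[(w1, None), (w2, None), (w3, Some x3)]"
  have eq: "(w1, None) # (w2, None) # (w3, Some x3) # r = ?pre @ r" by simp
  note d = 6(2)[unfolded eq] and c = 6(3)[unfolded eq]
  have nl: "\<not> adj E w1 w1" "\<not> adj E w2 w2" "\<not> adj E x3 x3" using cond_noloop[OF d c] by (auto simp: bverts_append)
  have na: "\<not> adj E w1 x3" "\<not> adj E w2 x3"
  proof -
    have "{w1, x3} \<notin> AE (?pre @ r)" "{w2, x3} \<notin> AE (?pre @ r)"
      using d AE_sub[of _ r] hd_in_bverts[of r] by (auto simp: bverts_append doubleton_eq_iff)
    thus "\<not> adj E w1 x3" "\<not> adj E w2 x3" using c unfolding cond_def by (auto simp: bverts_append)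
  qed
  show ?case unfolding eq
  proof (rule peel[OF d c _ dfree3[OF nl na]])
    show "{w1, w2, x3} \<subseteq> set (bverts ?pre)" by simp
    show "\<forall>a\<in>{w1, w2, x3}. \<forall>c\<in>set (bverts r). {a, c} \<notin> AE (?pre @ r)"
      using d AE_sub[of _ r] hd_in_bverts[of r] by (auto simp: bverts_append doubleton_eq_iff)
    show "cond E r \<Longrightarrow> \<exists>D'\<subseteq>set (bverts r). dfree E D' \<and> 2 * length (bverts r) \<le> 3 * card D'"
      using 6(1) d by (simp add: bverts_append)
    show "2 * length (bverts ?pre) \<le> 3 * card {w1, w2, x3}" using d by (auto simp: card_insert_if)
  qed
next
  case (7 w1 w2 x2 r)
  let ?pre = "[(w1, None), (w2, Some x2)]"
  have eq: "(w1, None) # (w2, Some x2) # r = ?pre @ r" by simp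
  note d = 7(2)[unfolded eq] and c = 7(3)[unfolded eq]
  have nl: "\<not> adj E w1 w1" "\<not> adj E x2 x2" using cond_noloop[OF d c] by (auto simp: bverts_append)
  show ?case unfolding eq
  proof (rule peel[OF d c _ dfree2[OF nl]])
    show "{w1, x2} \<subseteq> set (bverts ?pre)" by simp
    show "\<forall>a\<in>{w1, x2}. \<forall>c\<in>set (bverts r). {a, c} \<notin> AE (?pre @ r)"
      using d AE_sub[of _ r] hd_in_bverts[of r] by (auto simp: bverts_append doubleton_eq_iff)
    show "cond E r \<Longrightarrow> \<exists>D'\<subseteq>set (bverts r). dfree E D' \<and> 2 * length (bverts r) \<le> 3 * card D'"
      using 7(1) d by (simp add: bverts_append)
    show "2 * length (bverts ?pre) \<le> 3 * card {w1, x2}" using d by (auto simp: card_insert_if)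
  qed
next
  case (8 w1 x1 w2 r)
  let ?pre = "[(w1, Some x1), (w2, None)]"
  have eq: "(w1, Some x1) # (w2, None) # r = ?pre @ r" by simp
  note d = 8(2)[unfolded eq] and c = 8(3)[unfolded eq]
  have nl: "\<not> adj E x1 x1" "\<not> adj E w1 w1" using cond_noloop[OF d c] by (auto simp: bverts_append)
  show ?case unfolding eq
  proof (rule peel[OF d c _ dfree2[OF nl]])
    show "{x1, w1} \<subseteq> set (bverts ?pre)" by simp
    show "\<forall>a\<in>{x1, w1}. \<forall>c\<in>set (bverts r). {a, c} \<notin> AE (?pre @ r)"
      using d AE_sub[of _ r] hd_in_bverts[of r] by (auto simp: bverts_append doubleton_eq_iff)
    show "cond E r \<Longrightarrow> \<exists>D'\<subseteq>set (bverts r). dfree E D' \<and> 2 * length (bverts r) \<le> 3 * card D'"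
      using 8(1) d by (simp add: bverts_append)
    show "2 * length (bverts ?pre) \<le> 3 * card {x1, w1}" using d by (auto simp: card_insert_if)
  qed
next
  case (9 w1 x1 w2 x2 r)
  let ?pre = "[(w1, Some x1), (w2, Some x2)]"
  have eq: "(w1, Some x1) # (w2, Some x2) # r = ?pre @ r" by simp
  note d = 9(2)[unfolded eq] and c = 9(3)[unfolded eq]
  have nl: "\<not> adj E x1 x1" "\<not> adj E w1 w1" "\<not> adj E x2 x2" using cond_noloop[OF d c] by (auto simp: bverts_append)
  have na: "\<not> adj E x1 x2" "\<not> adj E w1 x2"
  proof -
    have "{x1, x2} \<notin> AE (?pre @ r)" "{w1, x2} \<notin> AE (?pre @ r)"
      using d AE_sub[of _ r] hd_in_bverts[of r] by (auto simp: bverts_append doubleton_eq_iff)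
    thus "\<not> adj E x1 x2" "\<not> adj E w1 x2" using c unfolding cond_def by (auto simp: bverts_append)
  qed
  show ?case unfolding eq
  proof (rule peel[OF d c _ dfree3[OF nl na]])
    show "{x1, w1, x2} \<subseteq> set (bverts ?pre)" by simp
    show "\<forall>a\<in>{x1, w1, x2}. \<forall>c\<in>set (bverts r). {a, c} \<notin> AE (?pre @ r)"
      using d AE_sub[of _ r] hd_in_bverts[of r] by (auto simp: bverts_append doubleton_eq_iff)
    show "cond E r \<Longrightarrow> \<exists>D'\<subseteq>set (bverts r). dfree E D' \<and> 2 * length (bverts r) \<le> 3 * card D'"
      using 9(1) d by (simp add: bverts_append)
    show "2 * length (bverts ?pre) \<le> 3 * card {x1, w1, x2}" using d by (auto simp: card_insert_if)
  qed
qed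


lemma bverts_map_set:
  "set (bverts (map (\<lambda>t. (f t, if P t then Some (g t) else None)) xs)) = f ` set xs \<union> g ` {t \<in> set xs. P t}"
  by (induction xs) auto

lemma bverts_map_distinct:
  "distinct xs \<Longrightarrow> inj_on f (set xs) \<Longrightarrow> inj_on g {t \<in> set xs. P t} \<Longrightarrow>
   f ` set xs \<inter> g ` {t \<in> set xs. P t} = {} \<Longrightarrow>
   distinct (bverts (map (\<lambda>t. (f t, if P t then Some (g t) else None)) xs))"
proof (induction xs)
  case Nil then show ?case by simp
next
  case (Cons x xs)
  have d: "distinct (bverts (map (\<lambda>t. (f t, if P t then Some (g t) else None)) xs))"
    using Cons by (intro Cons.IH) (auto intro: inj_on_subset)
  have s: "set (bverts (map (\<lambda>t. (f t, if P t then Some (g t) else None)) xs)) = f ` set xs \<union> g ` {t \<in> set xs. P t}"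
    by (rule bverts_map_set)
  have fx: "f x \<notin> f ` set xs" using Cons(2,3) by (auto simp: inj_on_def)
  have fxg: "f x \<notin> g ` {t \<in> set xs. P t}" using Cons(5) by auto
  show ?case
  proof (cases "P x")
    case True
    have gx: "g x \<notin> g ` {t \<in> set xs. P t}" using Cons(2,4) True by (auto simp: inj_on_def)
    have gxf: "g x \<notin> f ` set xs" using Cons(5) True by auto
    have "f x \<noteq> g x" using Cons(5) True by auto
    thus ?thesis using True d s fx fxg gx gxf by simp
  next
    case False
    thus ?thesis using d s fx fxg by simp
  qed
qed

lemma AE_consec: "Suc i < length bs \<Longrightarrow> {fst (bs ! i), fst (bs ! Suc i)} \<in> AE bs"
proof (induction bs arbitrary: i rule: bverts.induct)
  case 1 then show ?case by simp
next
  case (2 w bs) then show ?case by (cases i) (auto simp: hd_conv_nth)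
next
  case (3 w x bs) then show ?case by (cases i) (auto simp: hd_conv_nth)
qed

lemma AE_leaf: "(w, Some x) \<in> set bs \<Longrightarrow> {w, x} \<in> AE bs"
  by (induction bs rule: bverts.induct) auto

lemma idx_t:
  assumes "i < l" "j < (l::nat)" "i \<noteq> j"
  shows "(i + l - j - 1) mod l < l - 1 \<and> (j + 1 + (i + l - j - 1) mod l) mod l = i"
proof -
  let ?t = "(i + l - j - 1) mod l"
  have a: "(j + 1 + ?t) mod l = i"
  proof -
    have "(j + 1 + ?t) mod l = (j + 1 + (i + l - j - 1)) mod l" by (metis mod_add_right_eq)
    also have "j + 1 + (i + l - j - 1) = i + l" using assms by simp
    finally show ?thesis using assms by simp
  qed
  have "?t < l" using assms by simp
  moreover have "?t \<noteq> l - 1"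
  proof
    assume "?t = l - 1"
    hence "(j + 1 + ?t) mod l = (j + l) mod l" using assms by simp
    thus False using a assms by simp
  qed
  ultimately show ?thesis using a by simp
qed

lemma inv_idx:
  assumes "t < l" "j < (l::nat)"
  shows "((j + 1 + t) mod l + (l - j - 1)) mod l = t"
proof -
  have "((j + 1 + t) mod l + (l - j - 1)) mod l = (j + 1 + t + (l - j - 1)) mod l"
    by (metis mod_add_left_eq)
  also have "j + 1 + t + (l - j - 1) = t + l" using assms by simp
  finally show ?thesis using assms by simp
qed

lemma sc_lower:
  assumes sc: "scyc us I sp V E" and jl: "j < length us" and JI: "J \<subseteq> I"
  shows "\<exists>D. dissociation_set V E D \<and> us ! j \<notin> D \<and> (\<forall>i\<in>I - J. sp i \<notin> D) \<and>
     2 * ((length us - 1) + card (J - {j})) + 3 * (if j \<in> J then 1 else 0) \<le> 3 * card D"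
proof -
  let ?l = "length us"
  define a where "a t = (j + 1 + t) mod ?l" for t
  define f where "f t = us ! (a t)" for t
  define g where "g t = sp (a t)" for t
  define P where "P t = (a t \<in> J)" for t
  define bs where "bs = map (\<lambda>t. (f t, if P t then Some (g t) else None)) [0..<?l - 1]"
  define W where "W = (set us - {us ! j}) \<union> sp ` (J - {j})"
  have l3: "3 \<le> ?l" using sc_l3[OF sc] .
  have l0: "0 < ?l" using l3 by linarith
  have al: "a t < ?l" for t using l0 by (simp add: a_def)
  have anj: "t < ?l - 1 \<Longrightarrow> a t \<noteq> j" for t
  proof
    assume t: "t < ?l - 1" and e: "a t = j"
    have "j + 1 + t < 2 * ?l" using t jl by simp
    show False
    proof (cases "j + 1 + t < ?l")
      case True thus False using e by (simp add: a_def)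
    next
      case False
      hence "a t = j + 1 + t - ?l" unfolding a_def using \<open>j + 1 + t < 2 * ?l\<close>
        by (simp add: le_mod_geq)
      thus False using e t jl \<open>\<not> j + 1 + t < ?l\<close> by linarith
    qed
  qed
  have ainj: "inj_on a {..<?l - 1}"
  proof (rule inj_onI)
    fix s t assume s: "s \<in> {..<?l - 1}" and t: "t \<in> {..<?l - 1}" and e: "a s = a t"
    have "s = (a s + (?l - j - 1)) mod ?l" using inv_idx[of s ?l j] s jl by (simp add: a_def)
    also have "\<dots> = (a t + (?l - j - 1)) mod ?l" using e by simp
    also have "\<dots> = t" using inv_idx[of t ?l j] t jl by (simp add: a_def)
    finally show "s = t" .
  qed
  have ahit: "i < ?l \<Longrightarrow> i \<noteq> j \<Longrightarrow> \<exists>t < ?l - 1. a t = i" for i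
    using idx_t[of i ?l j] jl unfolding a_def by blast
  have aimg: "a ` {..<?l - 1} = {..<?l} - {j}"
    using al anj ahit by fastforce
  have asuc: "a (Suc t) = Suc (a t) mod ?l" for t unfolding a_def by (simp add: mod_Suc_eq)
  have dist_us: "distinct us" using sc_dist[OF sc] .
  have nth_eq: "x < ?l \<Longrightarrow> y < ?l \<Longrightarrow> us ! x = us ! y \<longleftrightarrow> x = y" for x y using sc_nth_eq[OF sc] by blast
  have injsp: "inj_on sp I" using sc_inj[OF sc] .
  have Il: "I \<subseteq> {..<?l}" using sc_I[OF sc] .
  have setxs: "set [0..<?l - 1] = {..<?l - 1}" by auto
  have fimg: "f ` {..<?l - 1} = set us - {us ! j}"
  proof -
    have "f ` {..<?l - 1} = (\<lambda>x. us ! x) ` (a ` {..<?l - 1})" by (auto simp: f_def)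
    also have "\<dots> = (\<lambda>x. us ! x) ` ({..<?l} - {j})" using aimg by simp
    also have "\<dots> = set us - {us ! j}"
    proof
      show "(\<lambda>x. us ! x) ` ({..<?l} - {j}) \<subseteq> set us - {us ! j}" using nth_eq jl by auto
      show "set us - {us ! j} \<subseteq> (\<lambda>x. us ! x) ` ({..<?l} - {j})"
      proof
        fix y assume "y \<in> set us - {us ! j}"
        then obtain x where "x < ?l" "us ! x = y" "y \<noteq> us ! j" by (metis DiffE in_set_conv_nth singletonI)
        thus "y \<in> (\<lambda>x. us ! x) ` ({..<?l} - {j})" by auto
      qed
    qed
    finally show ?thesis .
  qed
  have PJ: "a ` {t \<in> {..<?l - 1}. P t} = J - {j}"
  proof
    show "a ` {t \<in> {..<?l - 1}. P t} \<subseteq> J - {j}" using anj by (auto simp: P_def)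
    show "J - {j} \<subseteq> a ` {t \<in> {..<?l - 1}. P t}"
    proof
      fix i assume i: "i \<in> J - {j}"
      hence "i < ?l" using JI Il by auto
      then obtain t where "t < ?l - 1" "a t = i" using ahit i by auto
      thus "i \<in> a ` {t \<in> {..<?l - 1}. P t}" using i by (auto simp: P_def)
    qed
  qed
  have gimg: "g ` {t \<in> {..<?l - 1}. P t} = sp ` (J - {j})"
  proof -
    have "g ` {t \<in> {..<?l - 1}. P t} = sp ` (a ` {t \<in> {..<?l - 1}. P t})" by (auto simp: g_def image_image)
    thus ?thesis using PJ by simp
  qed
  have setbs: "set (bverts bs) = W"
    unfolding bs_def bverts_map_set setxs W_def fimg gimg by simp
  have distbs: "distinct (bverts bs)"
    unfolding bs_def
  proof (rule bverts_map_distinct)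
    show "distinct [0..<?l - 1]" by simp
    show "inj_on f (set [0..<?l - 1])"
      unfolding setxs
    proof (rule inj_onI)
      fix s t assume "s \<in> {..<?l - 1}" "t \<in> {..<?l - 1}" "f s = f t"
      thus "s = t" using ainj al nth_eq by (auto simp: f_def inj_on_def)
    qed
    show "inj_on g {t \<in> set [0..<?l - 1]. P t}"
      unfolding setxs
    proof (rule inj_onI)
      fix s t assume s: "s \<in> {t \<in> {..<?l - 1}. P t}" and t: "t \<in> {t \<in> {..<?l - 1}. P t}" and e: "g s = g t"
      have "a s \<in> I" "a t \<in> I" using s t JI by (auto simp: P_def)
      hence "a s = a t" using e injsp by (auto simp: g_def inj_on_def)
      thus "s = t" using ainj s t by (auto simp: inj_on_def)
    qed
    show "f ` set [0..<?l - 1] \<inter> g ` {t \<in> set [0..<?l - 1]. P t} = {}"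
      unfolding setxs fimg gimg using sc_disj[OF sc] JI by auto
  qed
  have cW: "card W = (?l - 1) + card (J - {j})"
  proof -
    have c1: "card (set us - {us ! j}) = ?l - 1" using distinct_card[OF dist_us] jl by simp
    have c2: "card (sp ` (J - {j})) = card (J - {j})" using injsp JI by (intro card_image) (auto intro: inj_on_subset)
    have "(set us - {us ! j}) \<inter> sp ` (J - {j}) = {}" using sc_disj[OF sc] JI by auto
    moreover have "finite (sp ` (J - {j}))" using JI Il finite_subset by (metis finite_Diff finite_imageI finite_lessThan)
    ultimately show ?thesis unfolding W_def using c1 c2 card_Un_disjoint by (metis finite_Diff finite_set)
  qed
  have lenbs: "length (bverts bs) = card W" using distinct_card[OF distbs] setbs by simp
  have lbs: "length bs = ?l - 1" by (simp add: bs_def)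
  have bsnth: "t < ?l - 1 \<Longrightarrow> bs ! t = (f t, if P t then Some (g t) else None)" for t
    by (simp add: bs_def)
  have cd: "cond E bs"
    unfolding cond_def setbs
  proof (intro ballI impI)
    fix p q assume p: "p \<in> W" and q: "q \<in> W" and ad: "adj E p q"
    from ad[unfolded sc_adj[OF sc]] show "{p, q} \<in> AE bs"
    proof
      assume "\<exists>i<?l. {p, q} = {us ! i, us ! (Suc i mod ?l)}"
      then obtain i where i: "i < ?l" "{p, q} = {us ! i, us ! (Suc i mod ?l)}" by blast
      have si: "Suc i mod ?l < ?l" using l0 by simp
      have "us ! i \<in> W" "us ! (Suc i mod ?l) \<in> W" using i(2) p q by (auto simp: doubleton_eq_iff)
      hence "us ! i \<noteq> us ! j" "us ! (Suc i mod ?l) \<noteq> us ! j" using sc_nth_sp[OF sc] i(1) si JI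
        unfolding W_def by auto
      hence ij: "i \<noteq> j" and sij: "Suc i mod ?l \<noteq> j" by auto
      obtain t where t: "t < ?l - 1" "a t = i" using ahit[OF i(1) ij] by blast
      have "Suc t < ?l - 1"
      proof (rule ccontr)
        assume "\<not> Suc t < ?l - 1"
        hence "Suc t = ?l - 1" using t by simp
        hence "a (Suc t) = j" unfolding a_def using l0 jl by simp
        thus False using asuc t sij by simp
      qed
      hence "{fst (bs ! t), fst (bs ! Suc t)} \<in> AE bs" using lbs by (intro AE_consec) simp
      moreover have "fst (bs ! t) = us ! i" using bsnth t by (simp add: f_def)
      moreover have "fst (bs ! Suc t) = us ! (Suc i mod ?l)" using bsnth \<open>Suc t < ?l - 1\<close> t asuc by (simp add: f_def)
      ultimately show ?thesis using i(2) by simp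
    next
      assume "\<exists>i\<in>I. {p, q} = {us ! i, sp i}"
      then obtain i where i: "i \<in> I" "{p, q} = {us ! i, sp i}" by blast
      have il: "i < ?l" using i Il by auto
      have "sp i \<in> W" using i(2) p q by (auto simp: doubleton_eq_iff)
      hence "sp i \<in> sp ` (J - {j})" using sc_disj[OF sc] i(1) unfolding W_def by auto
      hence iJ: "i \<in> J - {j}" using injsp i(1) JI by (auto simp: inj_on_def)
      obtain t where t: "t < ?l - 1" "a t = i" using ahit[OF il] iJ by blast
      have "bs ! t = (us ! i, Some (sp i))" using bsnth[OF t(1)] t iJ by (simp add: f_def g_def P_def)
      hence "(us ! i, Some (sp i)) \<in> set bs" using t lbs by (metis nth_mem)
      thus ?thesis using AE_leaf i(2) by metis
    qed
  qed
  obtain D0 where D0: "D0 \<subseteq> W" "dfree E D0" "2 * length (bverts bs) \<le> 3 * card D0"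
    using caterpillar[OF distbs cd] setbs by auto
  define D where "D = D0 \<union> (if j \<in> J then {sp j} else {})"
  have WV: "W \<subseteq> V" using sc_V[OF sc] JI unfolding W_def by auto
  have spjW: "sp j \<notin> W" if "j \<in> J"
  proof
    assume "sp j \<in> W"
    hence "sp j \<in> sp ` (J - {j})" using sc_disj[OF sc] that JI unfolding W_def by auto
    thus False using injsp that JI by (auto simp: inj_on_def)
  qed
  have fJ: "finite J" using JI Il by (meson finite_lessThan finite_subset)
  have fW: "finite W" using fJ by (simp add: W_def)
  have fD0: "finite D0" using D0(1) fW by (rule finite_subset)
  have ujW: "us ! j \<notin> W"
  proof
    assume "us ! j \<in> W"
    then obtain i where "i \<in> J" "us ! j = sp i" unfolding W_def by auto
    thus False using sc_nth_sp[OF sc jl, of i] JI by auto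
  qed
  have cD: "card D = card D0 + (if j \<in> J then 1 else 0)"
  proof (cases "j \<in> J")
    case True
    hence "sp j \<notin> D0" using spjW D0(1) by blast
    thus ?thesis using True fD0 by (simp add: D_def)
  qed (simp add: D_def)
  have dfD: "dfree E D"
  proof (cases "j \<in> J")
    case True
    have "\<not> adj E (sp j) (sp j)"
    proof
      assume "adj E (sp j) (sp j)"
      hence "sp j = us ! j" using sc_nbr_sp[OF sc] True JI by blast
      moreover have "us ! j \<noteq> sp j" using sc_nth_sp[OF sc jl] True JI by blast
      ultimately show False by simp
    qed
    hence "dfree E {sp j}" by (rule dfree1)
    moreover have "\<forall>x\<in>D0. \<forall>y\<in>{sp j}. \<not> adj E x y"
    proof (intro ballI notI)
      fix x y assume "x \<in> D0" "y \<in> {sp j}" "adj E x y"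
      hence "adj E (sp j) x" using adj_sym by fastforce
      hence "x = us ! j" using sc_nbr_sp[OF sc] True JI by blast
      thus False using \<open>x \<in> D0\<close> D0(1) ujW by auto
    qed
    ultimately have "dfree E (D0 \<union> {sp j})" using dfree_union D0(2) by blast
    thus ?thesis using True by (simp add: D_def)
  next
    case False thus ?thesis using D0(2) by (simp add: D_def)
  qed
  have ds: "dissociation_set V E D"
    unfolding diss_set_iff using dfD D0(1) WV JI sc_V[OF sc] by (auto simp: D_def)
  have nuj: "us ! j \<notin> D"
    using D0(1) ujW sc_nth_sp[OF sc jl, of j] JI unfolding D_def by auto
  have nsp: "\<forall>i\<in>I - J. sp i \<notin> D"
  proof
    fix i assume i: "i \<in> I - J"
    have "sp i \<notin> W"
    proof
      assume "sp i \<in> W"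
      hence "sp i \<in> sp ` (J - {j})" using sc_disj[OF sc] i unfolding W_def by auto
      thus False using injsp i JI by (auto simp: inj_on_def)
    qed
    moreover have "j \<in> J \<Longrightarrow> sp i \<noteq> sp j" using injsp i JI by (auto simp: inj_on_def)
    ultimately show "sp i \<notin> D" using D0(1) unfolding D_def by auto
  qed
  show ?thesis
    using ds nuj nsp cD D0(3) lenbs cW by (intro exI[of _ D]) auto
qed


definition Nf :: "'a list \<Rightarrow> 'a set \<Rightarrow> nat \<Rightarrow> nat" where
  "Nf us D x = (if us ! (x mod length us) \<in> D then 0 else 1)"

definition cw :: "'a list \<Rightarrow> 'a set \<Rightarrow> nat \<Rightarrow> nat" where
  "cw us D y = Nf us D y + Nf us D (y + 1) + Nf us D (y + 2)"

lemma sum_rot1: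
  assumes "0 < (l::nat)"
  shows "(\<Sum>y<l. f (Suc y mod l)) = (\<Sum>y<l. f y)"
proof -
  obtain n where n: "l = Suc n" using assms by (cases l) auto
  have "(\<Sum>y<Suc n. f (Suc y mod Suc n)) = (\<Sum>y<n. f (Suc y mod Suc n)) + f (Suc n mod Suc n)"
    by (rule sum.lessThan_Suc)
  also have "(\<Sum>y<n. f (Suc y mod Suc n)) = (\<Sum>y<n. f (Suc y))" by (intro sum.cong) auto
  also have "f (Suc n mod Suc n) = f 0" by simp
  also have "(\<Sum>y<n. f (Suc y)) + f 0 = (\<Sum>y<Suc n. f y)" by (subst sum.lessThan_Suc_shift) (simp add: add.commute)
  finally show ?thesis using n by simp
qed

lemma sum_rot:
  assumes "0 < (l::nat)"
  shows "(\<Sum>y<l. f ((y + i) mod l)) = (\<Sum>y<l. f y)"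
proof (induction i)
  case 0 show ?case by (intro sum.cong) auto
next
  case (Suc i)
  have "(\<Sum>y<l. f ((y + Suc i) mod l)) = (\<Sum>y<l. (\<lambda>z. f ((z + i) mod l)) (Suc y mod l))"
    by (intro sum.cong) (auto simp: mod_add_left_eq)
  also have "\<dots> = (\<Sum>y<l. f ((y + i) mod l))" by (rule sum_rot1[OF assms])
  finally show ?case using Suc by simp
qed

lemma Nf_mod: "Nf us D (x mod length us) = Nf us D x"
  by (simp add: Nf_def)

lemma Nf_plus_l: "Nf us D (x + length us) = Nf us D x"
  by (simp add: Nf_def)

lemma Nf_sum:
  assumes "0 < length us"
  shows "(\<Sum>y<length us. Nf us D (y + i)) = card {j. j < length us \<and> us ! j \<notin> D}"
proof -
  have "(\<Sum>y<length us. Nf us D (y + i)) = (\<Sum>y<length us. Nf us D ((y + i) mod length us))"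
    by (simp add: Nf_mod)
  also have "\<dots> = (\<Sum>y<length us. Nf us D y)" by (rule sum_rot[OF assms])
  also have "\<dots> = (\<Sum>y<length us. if us ! y \<in> D then 0 else 1)" by (intro sum.cong) (auto simp: Nf_def)
  also have "\<dots> = card {j. j < length us \<and> us ! j \<notin> D}"
  proof -
    have "{x. x < length us} \<inter> - {y. us ! y \<in> D} = {j. j < length us \<and> us ! j \<notin> D}" by auto
    thus ?thesis by (simp add: sum.If_cases lessThan_def)
  qed
  finally show ?thesis .
qed

lemma cw_sum:
  assumes "0 < length us"
  shows "(\<Sum>y<length us. cw us D y) = 3 * card {j. j < length us \<and> us ! j \<notin> D}"
proof -
  have "(\<Sum>y<length us. cw us D y) = (\<Sum>y<length us. Nf us D (y + 0)) + (\<Sum>y<length us. Nf us D (y + 1)) + (\<Sum>y<length us. Nf us D (y + 2))"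
    by (simp add: cw_def sum.distrib)
  thus ?thesis using Nf_sum[OF assms, of D 0] Nf_sum[OF assms, of D 1] Nf_sum[OF assms, of D 2] by simp
qed

lemma two_in_D_nbrs:
  assumes ds: "dissociation_set V E D" and fV: "finite V" and z: "z \<in> D"
    and ab: "a \<noteq> b" "a \<in> D" "b \<in> D" "adj E z a" "adj E z b"
  shows False
proof -
  have fD: "finite D" using ds fV by (auto simp: dissociation_set_def intro: finite_subset)
  have "{a, b} \<subseteq> {y \<in> D. adj E z y}" using ab by auto
  hence "card {a, b} \<le> card {y \<in> D. adj E z y}" using fD by (intro card_mono) auto
  moreover have "card {y \<in> D. adj E z y} \<le> 1" using ds z by (auto simp: dissociation_set_def)
  ultimately show False using ab(1) by simp
qed

context
  fixes us I sp V E
  assumes sc: "scyc us I sp V E"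
begin

lemma sc_adj_pred: "i < length us \<Longrightarrow> adj E (us ! i) (us ! ((i + length us - 1) mod length us))"
proof -
  assume i: "i < length us"
  have l0: "0 < length us" using sc_l0[OF sc] .
  have "adj E (us ! ((i + length us - 1) mod length us)) (us ! (Suc ((i + length us - 1) mod length us) mod length us))"
    using sc_adj_cyc[OF sc] l0 by simp
  thus ?thesis using suc_pred_idx[OF i] adj_sym by metis
qed

lemma cw_ge1:
  assumes ds: "dissociation_set V E D"
  shows "1 \<le> cw us D y"
proof (rule ccontr)
  let ?l = "length us"
  assume "\<not> 1 \<le> cw us D y"
  hence all: "us ! (y mod ?l) \<in> D" "us ! ((y + 1) mod ?l) \<in> D" "us ! ((y + 2) mod ?l) \<in> D"
    by (auto simp: cw_def Nf_def split: if_splits)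
  have l0: "0 < ?l" using sc_l0[OF sc] .
  have l3: "3 \<le> ?l" using sc_l3[OF sc] .
  let ?m = "(y + 1) mod ?l"
  have m: "?m < ?l" using l0 by simp
  have s1: "Suc ?m mod ?l = (y + 2) mod ?l" by (simp add: mod_Suc_eq)
  have p1: "(?m + ?l - 1) mod ?l = y mod ?l"
  proof -
    have "Suc (y mod ?l) mod ?l = ?m" by (simp add: mod_Suc_eq)
    thus ?thesis using pred_idx[of "y mod ?l" ?l ?m] l0 by simp
  qed
  have a1: "adj E (us ! ?m) (us ! ((y + 2) mod ?l))" using sc_adj_cyc[OF sc m] s1 by simp
  have a2: "adj E (us ! ?m) (us ! (y mod ?l))" using sc_adj_pred[OF m] p1 by simp
  have ne: "(y + 2) mod ?l \<noteq> y mod ?l"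
  proof
    assume "(y + 2) mod ?l = y mod ?l"
    hence "(y mod ?l + 2) mod ?l = y mod ?l" by (metis mod_add_left_eq)
    thus False using mod_plus2_neq[of "y mod ?l" ?l] l0 l3 by simp
  qed
  hence "us ! ((y + 2) mod ?l) \<noteq> us ! (y mod ?l)" using sc_nth_eq[OF sc] l0 by simp
  thus False using two_in_D_nbrs[OF ds sc_finite[OF sc] all(2) _ all(3) all(1) a1 a2] by simp
qed

lemma spike_nbrs:
  assumes ds: "dissociation_set V E D" and s: "s \<in> I" "sp s \<in> D" "us ! s \<in> D"
  shows "Nf us D (s + length us - 1) = 1 \<and> Nf us D (s + 1) = 1"
proof -
  let ?l = "length us"
  have sl: "s < ?l" using s sc_I[OF sc] by auto
  have l0: "0 < ?l" using sc_l0[OF sc] .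
  have as: "adj E (us ! s) (sp s)" using sc_adj_sp[OF sc s(1)] .
  have n1: "us ! ((s + ?l - 1) mod ?l) \<notin> D"
  proof
    assume h: "us ! ((s + ?l - 1) mod ?l) \<in> D"
    have "us ! ((s + ?l - 1) mod ?l) \<noteq> sp s" using sc_nth_sp[OF sc _ s(1)] l0 by simp
    thus False using two_in_D_nbrs[OF ds sc_finite[OF sc] s(3) _ h s(2) sc_adj_pred[OF sl] as] by simp
  qed
  have n2: "us ! (Suc s mod ?l) \<notin> D"
  proof
    assume h: "us ! (Suc s mod ?l) \<in> D"
    have "us ! (Suc s mod ?l) \<noteq> sp s" using sc_nth_sp[OF sc _ s(1)] l0 by simp
    thus False using two_in_D_nbrs[OF ds sc_finite[OF sc] s(3) _ h s(2) sc_adj_cyc[OF sc sl] as] by simp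
  qed
  show ?thesis using n1 n2 by (simp add: Nf_def)
qed

end


lemma cw_per: "cw us D y = 1 \<Longrightarrow> cw us D (Suc y) = 1 \<Longrightarrow> Nf us D (y + 3) = Nf us D y"
  unfolding cw_def by (simp add: numeral_3_eq_3 numeral_2_eq_2)

context
  fixes us I sp V E
  assumes sc: "scyc us I sp V E"
begin

lemma window_claim:
  assumes ds: "dissociation_set V E D" and allsp: "\<forall>i\<in>I. sp i \<in> D"
    and p: "p \<in> I" and q: "q \<in> I" and pq: "p < q" and g: "(q - p) mod 3 = 2"
  shows "\<exists>t < q - p. 2 \<le> cw us D (p + length us - 1 + t)"
proof -
  let ?l = "length us"
  let ?N = "Nf us D"
  have l0: "0 < ?l" using sc_l0[OF sc] .
  have ql: "q < ?l" using q sc_I[OF sc] by (meson lessThan_iff subsetD)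
  have "q - p = (q - p) div 3 * 3 + (q - p) mod 3" by simp
  hence "q - p = 3 * ((q - p) div 3) + 2" using g by simp
  then obtain m where m: "q - p = 3 * m + 2" by blast
  have y0: "p + ?l - 1 + 0 + 1 = p + ?l" using l0 by simp
  show ?thesis
  proof (cases "us ! p \<in> D")
    case True
    have sn: "?N (p + ?l - 1) = 1 \<and> ?N (p + 1) = 1" using spike_nbrs[OF sc ds p allsp[rule_format, OF p] True] .
    have "cw us D (p + ?l - 1 + 0) = ?N (p + ?l - 1) + ?N (p + ?l) + ?N (p + ?l + 1)"
      unfolding cw_def using l0 by (simp add: add.commute add.left_commute)
    also have "?N (p + ?l + 1) = ?N (p + 1)" using Nf_plus_l[of us D "p + 1"] by (simp add: add.commute add.left_commute)
    finally have "2 \<le> cw us D (p + ?l - 1 + 0)" using sn by simp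
    thus ?thesis using pq by (intro exI[of _ 0]) auto
  next
    case False
    have pl: "p < ?l" using pq ql by simp
    hence Np: "?N p = 1" using False by (simp add: Nf_def)
    show ?thesis
    proof (rule ccontr)
      assume "\<not> ?thesis"
      hence one: "t < q - p \<Longrightarrow> cw us D (p + ?l - 1 + t) = 1" for t
        using cw_ge1[OF sc ds, of "p + ?l - 1 + t"] by fastforce
      have per: "x = p + ?l - 1 + t \<Longrightarrow> Suc t < q - p \<Longrightarrow> ?N (x + 3) = ?N x" for t x
      proof -
        assume xt: "x = p + ?l - 1 + t" and st: "Suc t < q - p"
        have "cw us D (Suc x) = 1" using one[OF st] xt by simp
        moreover have "cw us D x = 1" using one st xt by simp
        ultimately show ?thesis using cw_per[of us D x] by simp
      qed
      have w0: "cw us D (p + ?l - 1) = 1" using one[of 0] pq by simp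
      have "cw us D (p + ?l - 1) = ?N (p + ?l - 1) + ?N (p + ?l) + ?N (p + ?l + 1)"
        unfolding cw_def using l0 by (simp add: add.commute add.left_commute)
      moreover have "?N (p + ?l) = 1" using Np Nf_plus_l[of us D p] by simp
      ultimately have Np1: "?N (p + ?l + 1) = 0" using w0 by simp
      have ind: "s \<le> m \<Longrightarrow> ?N (p + ?l + 3 * s) = 1 \<and> ?N (p + ?l + 1 + 3 * s) = 0" for s
      proof (induction s)
        case 0 then show ?case using Np1 Np Nf_plus_l[of us D p] by simp
      next
        case (Suc s)
        define x where "x = p + ?l + 3 * s"
        have IH: "?N x = 1" "?N (x + 1) = 0" using Suc unfolding x_def by auto
        have a: "?N (x + 3) = ?N x"
          by (rule per[of x "3 * s + 1"]) (use l0 Suc.prems m in \<open>auto simp: x_def\<close>)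
        have b: "?N ((x + 1) + 3) = ?N (x + 1)"
          by (rule per[of "x + 1" "3 * s + 2"]) (use l0 Suc.prems m in \<open>auto simp: x_def\<close>)
        have f1: "?N (x + 3) = 1" using a IH by simp
        have f2: "?N ((x + 1) + 3) = 0" using b IH by simp
        have e3: "p + ?l + 3 * Suc s = x + 3" by (simp add: x_def)
        have e4: "p + ?l + 1 + 3 * Suc s = (x + 1) + 3" by (simp add: x_def)
        show ?case using f1 f2 e3 e4 by metis
      qed
      have qm: "q = p + 3 * m + 2" using m pq by simp
      have A: "?N (p + ?l + 3 * m) = 1" and B: "?N (p + ?l + 1 + 3 * m) = 0" using ind[of m] by auto
      show False
      proof (cases "us ! q \<in> D")
        case True
        have "?N (q + ?l - 1) = 1" using spike_nbrs[OF sc ds q allsp[rule_format, OF q] True] by simp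
        moreover have "q + ?l - 1 = p + ?l + 1 + 3 * m" using qm l0 by simp
        ultimately show False using B by simp
      next
        case False
        have Nq: "?N (q + ?l) = 1" using False Nf_plus_l[of us D q] ql by (simp add: Nf_def)
        have w1: "cw us D (p + ?l - 1 + (3 * m + 1)) = 1" using one[of "3 * m + 1"] m by simp
        have w2: "p + ?l - 1 + (3 * m + 1) = p + ?l + 3 * m" using l0 by simp
        have w3: "cw us D (p + ?l + 3 * m) = 1" using w1 w2 by metis
        moreover have "cw us D (p + ?l + 3 * m) = ?N (p + ?l + 3 * m) + ?N (p + ?l + 1 + 3 * m) + ?N (q + ?l)"
          unfolding cw_def using qm by (simp add: ac_simps)
        ultimately show False using A B Nq by simp
      qed
    qed
  qed
qed

end


lemma card_nth_set:
  assumes "distinct us" "D \<subseteq> set us"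
  shows "card D = card {j. j < length us \<and> us ! j \<in> D}"
proof -
  have "D = (\<lambda>j. us ! j) ` {j. j < length us \<and> us ! j \<in> D}"
  proof
    show "D \<subseteq> (\<lambda>j. us ! j) ` {j. j < length us \<and> us ! j \<in> D}"
    proof
      fix x assume x: "x \<in> D"
      then obtain j where "j < length us" "us ! j = x" using assms(2) by (metis in_set_conv_nth subsetD)
      thus "x \<in> (\<lambda>j. us ! j) ` {j. j < length us \<and> us ! j \<in> D}" using x by auto
    qed
  qed auto
  moreover have "inj_on (\<lambda>j. us ! j) {j. j < length us \<and> us ! j \<in> D}"
    using assms(1) by (auto simp: inj_on_def nth_eq_iff_index_eq)
  ultimately show ?thesis by (metis card_image)
qed

lemma card_split_nth: "card {j. j < (l::nat) \<and> P j} + card {j. j < l \<and> \<not> P j} = l"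
proof -
  have "{j. j < l \<and> P j} \<union> {j. j < l \<and> \<not> P j} = {..<l}" by auto
  moreover have "{j. j < l \<and> P j} \<inter> {j. j < l \<and> \<not> P j} = {}" by auto
  ultimately show ?thesis by (metis card_Un_disjoint card_lessThan finite_Collect_conjI finite_Collect_less_nat)
qed

lemma mod_ne_close: "(x::nat) < y \<Longrightarrow> y < x + l \<Longrightarrow> x mod l \<noteq> y mod l"
proof
  assume a: "x < y" "y < x + l" "x mod l = y mod l"
  hence "l dvd (y - x)" using mod_eq_dvd_iff_nat[of x y l] by simp
  moreover have "0 < y - x" "y - x < l" using a by auto
  ultimately show False by (meson nat_dvd_not_less)
qed

context
  fixes us I sp V E
  assumes sc: "scyc us I sp V E"
begin

lemma sc_normalize:
  assumes ds: "dissociation_set V E D"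
  shows "\<exists>D'. dissociation_set V E D' \<and> card D \<le> card D' \<and> (\<forall>i\<in>I. sp i \<in> D')"
proof -
  define R where "R = {i \<in> I. sp i \<notin> D}"
  define D' where "D' = (D - (\<lambda>i. us ! i) ` R) \<union> sp ` I"
  have fV: "finite V" using sc_finite[OF sc] .
  have DV: "D \<subseteq> V" using ds by (simp add: dissociation_set_def)
  have fD: "finite D" using DV fV finite_subset by blast
  have fI: "finite I" using sc_finI[OF sc] .
  have Il: "I \<subseteq> {..<length us}" using sc_I[OF sc] .
  have D'V: "D' \<subseteq> V" using DV sc_V[OF sc] by (auto simp: D'_def)
  have df: "dfree E D'"
    unfolding dfree_def
  proof
    fix z assume z: "z \<in> D'"
    show "card {y \<in> D'. adj E z y} \<le> 1"
    proof (cases "\<exists>i\<in>I. z = sp i")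
      case True
      then obtain i where i: "i \<in> I" "z = sp i" by blast
      have "{y \<in> D'. adj E z y} \<subseteq> {us ! i}" using sc_nbr_sp[OF sc i(1)] i by auto
      hence "card {y \<in> D'. adj E z y} \<le> card {us ! i}" by (intro card_mono) auto
      thus ?thesis by simp
    next
      case False
      hence zD: "z \<in> D - (\<lambda>i. us ! i) ` R" using z by (auto simp: D'_def)
      have sub: "{y \<in> D'. adj E z y} \<subseteq> {y \<in> D. adj E z y}"
      proof
        fix y assume y: "y \<in> {y \<in> D'. adj E z y}"
        show "y \<in> {y \<in> D. adj E z y}"
        proof (cases "y \<in> D")
          case True thus ?thesis using y by simp
        next
          case False
          then obtain i where i: "i \<in> I" "y = sp i" using y by (auto simp: D'_def)
          hence iR: "i \<in> R" using False by (simp add: R_def)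
          have "adj E (sp i) z" using y i adj_sym by fastforce
          hence "z = us ! i" using sc_nbr_sp[OF sc i(1)] by blast
          thus ?thesis using zD iR by auto
        qed
      qed
      have "card {y \<in> D'. adj E z y} \<le> card {y \<in> D. adj E z y}" using sub fD by (intro card_mono) auto
      also have "\<dots> \<le> 1" using ds zD by (auto simp: dissociation_set_def)
      finally show ?thesis .
    qed
  qed
  have fR: "finite R" using fI by (simp add: R_def)
  have c1: "card D \<le> card (D - (\<lambda>i. us ! i) ` R) + card R"
  proof -
    have "card D \<le> card ((D - (\<lambda>i. us ! i) ` R) \<union> (\<lambda>i. us ! i) ` R)" using fD fR by (intro card_mono) auto
    also have "\<dots> \<le> card (D - (\<lambda>i. us ! i) ` R) + card ((\<lambda>i. us ! i) ` R)" by (rule card_Un_le)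
    also have "card ((\<lambda>i. us ! i) ` R) \<le> card R" using fR by (rule card_image_le)
    finally show ?thesis by simp
  qed
  have c2: "card (D - (\<lambda>i. us ! i) ` R) + card R \<le> card D'"
  proof -
    have "card (sp ` R) = card R" using sc_inj[OF sc] by (intro card_image) (auto simp: R_def intro: inj_on_subset)
    moreover have "(D - (\<lambda>i. us ! i) ` R) \<inter> sp ` R = {}" by (auto simp: R_def)
    moreover have "(D - (\<lambda>i. us ! i) ` R) \<union> sp ` R \<subseteq> D'" by (auto simp: D'_def R_def)
    moreover have "finite D'" using D'V fV finite_subset by blast
    ultimately show ?thesis using fD fR
      by (metis card_Un_disjoint card_mono finite_Diff finite_imageI)
  qed
  show ?thesis using df D'V c1 c2 by (intro exI[of _ D']) (auto simp: D'_def diss_set_iff)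
qed

lemma sc_upper_cyc:
  assumes ds: "dissociation_set V E D"
  shows "3 * card {j. j < length us \<and> us ! j \<in> D} \<le> 2 * length us"
proof -
  let ?l = "length us"
  have l0: "0 < ?l" using sc_l0[OF sc] .
  have "?l \<le> (\<Sum>y<?l. cw us D y)"
  proof -
    have "(\<Sum>y<?l. (1::nat)) \<le> (\<Sum>y<?l. cw us D y)" using cw_ge1[OF sc ds] by (intro sum_mono) auto
    thus ?thesis by simp
  qed
  hence "?l \<le> 3 * card {j. j < ?l \<and> us ! j \<notin> D}" using cw_sum[OF l0] by simp
  thus ?thesis using card_split_nth[of ?l "\<lambda>j. us ! j \<in> D"] by simp
qed

end


lemma Nf_mod_add: "Nf us D (x mod length us + i) = Nf us D (x + i)"
  unfolding Nf_def by (simp add: mod_add_left_eq)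

lemma cw_mod: "cw us D (x mod length us) = cw us D x"
  unfolding cw_def Nf_mod_add Nf_mod ..

lemma tel_step: "(x::nat) = a + b \<Longrightarrow> a mod 3 = 2 \<Longrightarrow> b mod 3 = (2 * m) mod 3 \<Longrightarrow> x mod 3 = (2 * Suc m) mod 3"
  by presburger

lemma lk0: "(e::nat) mod 3 = 1 \<Longrightarrow> d mod 3 = (2 * k + 2) mod 3 \<Longrightarrow> (e + d + (k + 2)) mod 3 = 2"
  by presburger

lemma lk_mod: "((l::nat) - d) mod 3 = 1 \<Longrightarrow> d mod 3 = (2 * (k - 1)) mod 3 \<Longrightarrow> d \<le> l \<Longrightarrow> 2 \<le> k \<Longrightarrow> (l + k) mod 3 = 2"
proof -
  assume a: "(l - d) mod 3 = 1" "d mod 3 = (2 * (k - 1)) mod 3" "d \<le> l" "2 \<le> k"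
  obtain k' where k: "k = k' + 2" using a(4) by (metis add.commute le_Suc_ex)
  have "2 * (k - 1) = 2 * k' + 2" using k by simp
  hence "d mod 3 = (2 * k' + 2) mod 3" using a(2) by simp
  hence "((l - d) + d + (k' + 2)) mod 3 = 2" using lk0 a(1) by blast
  thus ?thesis using a(3) k by simp
qed

lemma good_facts:
  assumes vg: "very_good_spikes l I" and fI: "finite I" and Il: "I \<subseteq> {..<l}"
  shows "2 \<le> card I \<and> (l + card I) mod 3 = 2 \<and>
    (\<forall>j. j + 1 < card I \<longrightarrow> (sorted_list_of_set I ! (j + 1) - sorted_list_of_set I ! j) mod 3 = 2)"
proof -
  let ?is = "sorted_list_of_set I"
  let ?k = "card I"
  have len: "length ?is = ?k" using fI by simp
  have setis: "set ?is = I" using fI by simp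
  have ss: "sorted_wrt (<) ?is" by simp
  have lm: "l mod 3 \<noteq> 1" using vg by (simp add: very_good_spikes_def)
  have g: "(?k = 1 \<and> l mod 3 = 1) \<or> (?k \<ge> 2 \<and> (\<forall>j. j + 1 < ?k \<longrightarrow> (?is ! (j + 1) - ?is ! j) mod 3 = 2)
              \<and> (l + ?is ! 0 - ?is ! (?k - 1)) mod 3 = 1)"
    using vg[unfolded very_good_spikes_def good_spikes_def Let_def len] by blast
  hence k2: "?k \<ge> 2" and dif: "\<forall>j. j + 1 < ?k \<longrightarrow> (?is ! (j + 1) - ?is ! j) mod 3 = 2"
    and wrap: "(l + ?is ! 0 - ?is ! (?k - 1)) mod 3 = 1" using lm by auto
  have mono: "a \<le> b \<Longrightarrow> b < ?k \<Longrightarrow> ?is ! a \<le> ?is ! b" for a b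
    using ss len by (metis le_less sorted_wrt_nth_less)
  have tel: "m < ?k \<Longrightarrow> (?is ! m - ?is ! 0) mod 3 = (2 * m) mod 3" for m
  proof (induction m)
    case 0 then show ?case by simp
  next
    case (Suc m)
    have a: "?is ! 0 \<le> ?is ! m" using mono Suc.prems by simp
    have b: "?is ! m \<le> ?is ! Suc m" using mono Suc.prems by simp
    have "?is ! Suc m - ?is ! 0 = (?is ! Suc m - ?is ! m) + (?is ! m - ?is ! 0)" using a b by simp
    moreover have "(?is ! Suc m - ?is ! m) mod 3 = 2" using dif Suc.prems by simp
    moreover have "(?is ! m - ?is ! 0) mod 3 = (2 * m) mod 3" using Suc by simp
    ultimately show ?case by (rule tel_step)
  qed
  have "?k - 1 < length ?is" using len k2 by simp
  hence "?is ! (?k - 1) \<in> set ?is" by (rule nth_mem)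
  hence lastI: "?is ! (?k - 1) \<in> I" using setis by simp
  hence lastl: "?is ! (?k - 1) < l" using Il by auto
  have d0: "?is ! 0 \<le> ?is ! (?k - 1)" using mono k2 by simp
  define d where "d = ?is ! (?k - 1) - ?is ! 0"
  have dm: "d mod 3 = (2 * (?k - 1)) mod 3" using tel[of "?k - 1"] k2 by (simp add: d_def)
  have w: "(l - d) mod 3 = 1" using wrap d0 lastl by (simp add: d_def)
  have dl: "d \<le> l" using lastl by (simp add: d_def)
  have "(l + ?k) mod 3 = 2" by (rule lk_mod[OF w dm dl k2])
  thus ?thesis using k2 dif by simp
qed

lemma arith_h1: "(l::nat) + (k - 1) \<le> 3 * r \<Longrightarrow> c + r = l \<Longrightarrow> X = c + k \<Longrightarrow> 2 \<le> k \<Longrightarrow> 3 * X \<le> 2 * (l + k) + 1"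
  by arith

lemma final_arith: "3 * (x::nat) \<le> 2 * n + 1 \<Longrightarrow> n mod 3 = 2 \<Longrightarrow> 3 * x + 1 \<le> 2 * n"
  by presburger

context
  fixes us I sp V E
  assumes sc: "scyc us I sp V E"
begin

lemma sc_upper_spk:
  assumes vg: "very_good_spikes (length us) I" and ds: "dissociation_set V E D"
  shows "3 * card D + 1 \<le> 2 * (length us + card I)"
proof -
  let ?l = "length us"
  let ?k = "card I"
  let ?is = "sorted_list_of_set I"
  have l0: "0 < ?l" using sc_l0[OF sc] .
  have fI: "finite I" using sc_finI[OF sc] .
  have Il: "I \<subseteq> {..<?l}" using sc_I[OF sc] .
  have gf: "2 \<le> ?k" "(?l + ?k) mod 3 = 2"
    "\<And>j. j + 1 < ?k \<Longrightarrow> (?is ! (j + 1) - ?is ! j) mod 3 = 2"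
    using good_facts[OF vg fI Il] by auto
  have len: "length ?is = ?k" using fI by simp
  have setis: "set ?is = I" using fI by simp
  have ss: "sorted_wrt (<) ?is" by simp
  have lt: "a < b \<Longrightarrow> b < ?k \<Longrightarrow> ?is ! a < ?is ! b" for a b using ss len by (simp add: sorted_wrt_nth_less)
  have inI: "a < ?k \<Longrightarrow> ?is ! a \<in> I" for a using setis len by (metis nth_mem)
  have isl: "a < ?k \<Longrightarrow> ?is ! a < ?l" for a using inI Il by auto
  obtain D' where D': "dissociation_set V E D'" "card D \<le> card D'" "\<forall>i\<in>I. sp i \<in> D'"
    using sc_normalize[OF sc ds] by blast
  have ex: "\<forall>a. \<exists>t. a < ?k - 1 \<longrightarrow> t < ?is ! (a + 1) - ?is ! a \<and> 2 \<le> cw us D' (?is ! a + ?l - 1 + t)"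
  proof
    fix a
    show "\<exists>t. a < ?k - 1 \<longrightarrow> t < ?is ! (a + 1) - ?is ! a \<and> 2 \<le> cw us D' (?is ! a + ?l - 1 + t)"
    proof (cases "a < ?k - 1")
      case True
      have "\<exists>t < ?is ! (a + 1) - ?is ! a. 2 \<le> cw us D' (?is ! a + ?l - 1 + t)"
        by (rule window_claim[OF sc D'(1) D'(3) inI inI lt gf(3)]) (use True in auto)
      thus ?thesis by blast
    qed simp
  qed
  then obtain tw where tw: "\<And>a. a < ?k - 1 \<Longrightarrow> tw a < ?is ! (a + 1) - ?is ! a \<and> 2 \<le> cw us D' (?is ! a + ?l - 1 + tw a)"
    by metis
  define y where "y a = ?is ! a + ?l - 1 + tw a" for a
  define Wt where "Wt = (\<lambda>a. y a mod ?l) ` {..<?k - 1}"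
  have Wsub: "Wt \<subseteq> {z. z < ?l \<and> 2 \<le> cw us D' z}"
  proof
    fix z assume "z \<in> Wt"
    then obtain a where a: "a < ?k - 1" "z = y a mod ?l" by (auto simp: Wt_def)
    have "cw us D' (y a mod ?l) = cw us D' (y a)" by (rule cw_mod)
    moreover have "2 \<le> cw us D' (y a)" using tw[OF a(1)] by (simp add: y_def)
    ultimately show "z \<in> {z. z < ?l \<and> 2 \<le> cw us D' z}" using a l0 by simp
  qed
  have inj: "inj_on (\<lambda>a. y a mod ?l) {..<?k - 1}"
  proof -
    have ne: "y a mod ?l \<noteq> y b mod ?l" if ab: "a < b" "b < ?k - 1" for a b
    proof (rule mod_ne_close)
      have ta: "tw a < ?is ! (a + 1) - ?is ! a" using tw ab by simp
      have tb: "tw b < ?is ! (b + 1) - ?is ! b" using tw ab by simp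
      have bk: "b < ?k" using ab by linarith
      have "?is ! (a + 1) \<le> ?is ! b"
      proof (cases "a + 1 = b")
        case False thus ?thesis using lt[of "a + 1" b] ab bk by simp
      qed simp
      moreover have "?is ! a < ?is ! (a + 1)" using lt ab by simp
      ultimately show "y a < y b" using ta l0 unfolding y_def by linarith
      have "?is ! (b + 1) < ?l" using isl ab by simp
      moreover have "?is ! b < ?is ! (b + 1)" using lt ab by simp
      ultimately show "y b < y a + ?l" using tb l0 unfolding y_def by linarith
    qed
    show ?thesis
    proof (rule inj_onI)
      fix a b assume "a \<in> {..<?k - 1}" "b \<in> {..<?k - 1}" "y a mod ?l = y b mod ?l"
      thus "a = b" using ne by (metis lessThan_iff linorder_neqE_nat)
    qed
  qed
  have cWt: "card Wt = ?k - 1" unfolding Wt_def using card_image[OF inj] by simp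
  have fWt: "finite Wt" by (simp add: Wt_def)
  have sumge: "?l + card Wt \<le> (\<Sum>z<?l. cw us D' z)"
  proof -
    have "(\<Sum>z<?l. (1::nat) + (if z \<in> Wt then 1 else 0)) \<le> (\<Sum>z<?l. cw us D' z)"
      using cw_ge1[OF sc D'(1)] Wsub by (intro sum_mono) auto
    moreover have "(\<Sum>z<?l. (1::nat) + (if z \<in> Wt then 1 else 0)) = ?l + card Wt"
    proof -
      have "(\<Sum>z<?l. (if z \<in> Wt then 1 else 0::nat)) = card ({..<?l} \<inter> Wt)"
        by (simp add: sum.If_cases)
      also have "{..<?l} \<inter> Wt = Wt" using Wsub by auto
      finally have h: "(\<Sum>z<?l. (if z \<in> Wt then 1 else 0::nat)) = card Wt" .
      have "(\<Sum>z<?l. (1::nat) + (if z \<in> Wt then 1 else 0)) = (\<Sum>z<?l. (1::nat)) + (\<Sum>z<?l. (if z \<in> Wt then 1 else 0::nat))"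
        by (rule sum.distrib)
      thus ?thesis using h by simp
    qed
    ultimately show ?thesis by simp
  qed
  let ?r = "card {j. j < ?l \<and> us ! j \<notin> D'}"
  let ?c = "card {j. j < ?l \<and> us ! j \<in> D'}"
  have r: "?l + (?k - 1) \<le> 3 * ?r" using sumge cw_sum[OF l0, of D'] cWt by simp
  have cr: "?c + ?r = ?l" by (rule card_split_nth)
  have cD': "card D' = ?c + ?k"
  proof -
    have D'V: "D' \<subseteq> V" using D'(1) by (simp add: dissociation_set_def)
    have "D' = (D' \<inter> set us) \<union> sp ` I" using D'V D'(3) sc_V[OF sc] by auto
    moreover have "(D' \<inter> set us) \<inter> sp ` I = {}" using sc_disj[OF sc] by auto
    moreover have "card (D' \<inter> set us) = ?c"
      using card_nth_set[OF sc_dist[OF sc], of "D' \<inter> set us"] by (auto intro: arg_cong[where f = card])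
    moreover have "card (sp ` I) = ?k" using sc_inj[OF sc] by (rule card_image)
    moreover have "card ((D' \<inter> set us) \<union> sp ` I) = card (D' \<inter> set us) + card (sp ` I)"
      by (rule card_Un_disjoint) (use fI sc_disj[OF sc] in auto)
    ultimately show ?thesis by simp
  qed
  have km: "?k - 1 + 1 = ?k" using gf(1) by simp
  have h1: "3 * card D' \<le> 2 * (?l + ?k) + 1" by (rule arith_h1[OF r cr cD' gf(1)])
  have "3 * card D' + 1 \<le> 2 * (?l + ?k)" using final_arith[OF h1 gf(2)] .
  thus ?thesis using D'(2) by simp
qed

end


lemma cyc_arith: "2 * l \<le> 3 * d + 2 \<Longrightarrow> 3 * d \<le> 2 * (l::nat) \<Longrightarrow> l mod 3 \<noteq> 0 \<Longrightarrow>
   3 * d + l + 1 + (if l mod 3 = 1 then 1 else 0) = 3 * l"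
  by presburger

lemma cyc_arith2: "2 * l \<le> 3 * x + 2 \<Longrightarrow> x \<le> d \<Longrightarrow> 3 * d + l + 1 + (if l mod 3 = 1 then 1 else 0) = 3 * (l::nat) \<Longrightarrow> l mod 3 \<noteq> 0 \<Longrightarrow> x = d"
  by presburger

lemma spk_arith: "2 * n \<le> 3 * x + 3 \<Longrightarrow> x \<le> d \<Longrightarrow> 3 * d + 1 \<le> 2 * (n::nat) \<Longrightarrow> n mod 3 = 2 \<Longrightarrow> 3 * d + 1 = 2 * n \<and> x = d"
  by presburger

lemma Good_cycle:
  assumes gc: "good_cycle V E"
  shows "Good V E"
proof -
  obtain vs where cg: "is_cycle_graph vs V E" and lm: "length vs mod 3 \<noteq> 0"
    using gc by (auto simp: good_cycle_def)
  let ?sp = "\<lambda>i::nat. (undefined :: 'a)"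
  have sc: "scyc vs {} ?sp V E" using cg by (simp add: scyc_def is_cycle_graph_def)
  let ?l = "length vs"
  have fV: "finite V" using sc_finite[OF sc] .
  have cV: "card V = ?l" using sc_cardV[OF sc] by simp
  have cE: "card E = ?l" using sc_cardE[OF sc] by simp
  have cc: "c1 V E = (if ?l mod 3 = 1 then 1 else 0)" using sc_c1[OF sc] .
  have Vs: "V = set vs" using sc_V[OF sc] by simp
  have up: "3 * card D \<le> 2 * ?l" if "dissociation_set V E D" for D
  proof -
    have "D \<subseteq> set vs" using that Vs by (simp add: dissociation_set_def)
    hence "card D = card {j. j < ?l \<and> vs ! j \<in> D}" by (rule card_nth_set[OF sc_dist[OF sc]])
    thus ?thesis using sc_upper_cyc[OF sc that] by simp
  qed
  have low: "\<exists>D. dissociation_set V E D \<and> vs ! j \<notin> D \<and> 2 * ?l \<le> 3 * card D + 2" if jl: "j < ?l" for j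
  proof -
    obtain D where "dissociation_set V E D" "vs ! j \<notin> D" "2 * ((?l - 1) + card ({} - {j})) + 3 * (if j \<in> {} then 1 else 0) \<le> 3 * card D"
      using sc_lower[OF sc jl, of "{}"] by blast
    thus ?thesis using jl by (intro exI[of _ D]) auto
  qed
  obtain D0 where D0: "dissociation_set V E D0" "card D0 = diss V E" using diss_attained[OF fV] by blast
  have l0: "0 < ?l" using sc_l0[OF sc] .
  obtain D1 where D1: "dissociation_set V E D1" "2 * ?l \<le> 3 * card D1 + 2" using low[OF l0] by blast
  have "card D1 \<le> diss V E" by (rule diss_ge[OF fV D1(1)])
  hence e1: "2 * ?l \<le> 3 * diss V E + 2" using D1(2) by simp
  have e2: "3 * diss V E \<le> 2 * ?l" using up[OF D0(1)] D0(2) by simp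
  have form: "3 * diss V E + ?l + 1 + (if ?l mod 3 = 1 then 1 else 0) = 3 * ?l"
    by (rule cyc_arith[OF e1 e2 lm])
  have av: "avoidp V E"
    unfolding avoidp_def
  proof
    fix u assume "u \<in> V"
    then obtain j where j: "j < ?l" "vs ! j = u" using Vs by (metis in_set_conv_nth)
    obtain D where D: "dissociation_set V E D" "u \<notin> D" "2 * ?l \<le> 3 * card D + 2" using low[OF j(1)] j(2) by blast
    have "card D \<le> diss V E" by (rule diss_ge[OF fV D(1)])
    hence "card D = diss V E" using cyc_arith2[OF D(3) _ form lm] by simp
    thus "\<exists>D. max_dissociation_set V E D \<and> u \<notin> D" using D by (auto simp: max_dissociation_set_def)
  qed
  show ?thesis unfolding Good_def
    using fV sc_ne[OF sc] sc_wfg[OF sc] sc_connected[OF sc] av form cV cE cc by simp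
qed

lemma Good_spiked:
  assumes vg: "very_good_spiked_cycle V E"
  shows "Good V E"
proof -
  obtain us I sp where isc: "is_spiked_cycle us I sp V E" and vgs: "very_good_spikes (length us) I"
    using vg by (auto simp: very_good_spiked_cycle_def)
  have sc: "scyc us I sp V E" using isc by (simp add: scyc_def is_spiked_cycle_def)
  let ?l = "length us"
  let ?k = "card I"
  let ?n = "?l + ?k"
  have fV: "finite V" using sc_finite[OF sc] .
  have fI: "finite I" using sc_finI[OF sc] .
  have gf: "2 \<le> ?k" "?n mod 3 = 2" using good_facts[OF vgs fI sc_I[OF sc]] by auto
  have lm: "?l mod 3 \<noteq> 1" using vgs by (simp add: very_good_spikes_def)
  have cV: "card V = ?n" using sc_cardV[OF sc] .
  have cE: "card E = ?n" using sc_cardE[OF sc] .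
  have cc: "c1 V E = 0" using sc_c1[OF sc] lm by simp
  have up: "3 * card D + 1 \<le> 2 * ?n" if "dissociation_set V E D" for D
    using sc_upper_spk[OF sc vgs that] .
  have low: "\<exists>D. dissociation_set V E D \<and> u \<notin> D \<and> 2 * ?n \<le> 3 * card D + 3" if u: "u \<in> V" for u
  proof (cases "u \<in> set us")
    case True
    then obtain j where j: "j < ?l" "us ! j = u" by (metis in_set_conv_nth)
    obtain D where D: "dissociation_set V E D" "us ! j \<notin> D"
      "2 * ((?l - 1) + card (I - {j})) + 3 * (if j \<in> I then 1 else 0) \<le> 3 * card D"
      using sc_lower[OF sc j(1), of I] by blast
    have "2 * ?n \<le> 3 * card D + 3"
    proof (cases "j \<in> I")
      case True
      hence "card (I - {j}) = ?k - 1" using fI by simp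
      thus ?thesis using D(3) True gf(1) j(1) by simp
    next
      case False
      hence "card (I - {j}) = ?k" by simp
      thus ?thesis using D(3) False j(1) by simp
    qed
    thus ?thesis using D j by blast
  next
    case False
    then obtain p where p: "p \<in> I" "u = sp p" using u sc_V[OF sc] by auto
    have "I - {p} \<noteq> {}"
    proof
      assume "I - {p} = {}"
      hence "I \<subseteq> {p}" by auto
      hence "?k \<le> card {p}" by (intro card_mono) auto
      hence "?k \<le> 1" by simp
      thus False using gf(1) by simp
    qed
    then obtain j where j: "j \<in> I" "j \<noteq> p" by blast
    have jl: "j < ?l" using j sc_I[OF sc] by auto
    obtain D where D: "dissociation_set V E D" "\<forall>i\<in>I - (I - {p}). sp i \<notin> D"
      "2 * ((?l - 1) + card ((I - {p}) - {j})) + 3 * (if j \<in> I - {p} then 1 else 0) \<le> 3 * card D"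
      using sc_lower[OF sc jl, of "I - {p}"] by blast
    have "card ((I - {p}) - {j}) = ?k - 2" using fI j p(1) by (simp add: card_Diff_subset)
    hence "2 * ?n \<le> 3 * card D + 3" using D(3) j gf(1) jl by simp
    moreover have "u \<notin> D" using D(2) p by auto
    ultimately show ?thesis using D(1) by blast
  qed
  obtain D0 where D0: "dissociation_set V E D0" "card D0 = diss V E" using diss_attained[OF fV] by blast
  have Vne: "V \<noteq> {}" using sc_ne[OF sc] .
  then obtain u0 where "u0 \<in> V" by blast
  obtain D1 where D1: "dissociation_set V E D1" "2 * ?n \<le> 3 * card D1 + 3" using low[OF \<open>u0 \<in> V\<close>] by blast
  have d1: "card D1 \<le> diss V E" by (rule diss_ge[OF fV D1(1)])
  have e2: "3 * diss V E + 1 \<le> 2 * ?n" using up[OF D0(1)] D0(2) by simp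
  have form0: "3 * diss V E + 1 = 2 * ?n" using spk_arith[OF D1(2) d1 e2 gf(2)] by simp
  have av: "avoidp V E"
    unfolding avoidp_def
  proof
    fix u assume "u \<in> V"
    obtain D where D: "dissociation_set V E D" "u \<notin> D" "2 * ?n \<le> 3 * card D + 3" using low[OF \<open>u \<in> V\<close>] by blast
    have "card D \<le> diss V E" by (rule diss_ge[OF fV D(1)])
    hence "card D = diss V E" using spk_arith[OF D(3) _ e2 gf(2)] by simp
    thus "\<exists>D. max_dissociation_set V E D \<and> u \<notin> D" using D by (auto simp: max_dissociation_set_def)
  qed
  show ?thesis unfolding Good_def
    using fV Vne sc_wfg[OF sc] sc_connected[OF sc] av form0 cV cE cc by simp
qed


lemma Good_P3:
  assumes d: "distinct [a, b, c]"
  shows "Good {a, b, c} {{a, b}, {b, c}}"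
proof -
  let ?V = "{a, b, c}" and ?E = "{{a, b}, {b, c}}"
  have ab: "a \<noteq> b" "b \<noteq> c" "a \<noteq> c" using d by auto
  have fV: "finite ?V" by simp
  have cV: "card ?V = 3" using ab by simp
  have cE: "card ?E = 2" using ab by (simp add: doubleton_eq_iff)
  have w: "wfg ?V ?E" unfolding wfg_def using ab by blast
  have adjE: "adj ?E x y \<longleftrightarrow> {x, y} = {a, b} \<or> {x, y} = {b, c}" for x y by (simp add: adj_def)
  have noloop: "\<not> adj ?E x x" for x using ab by (auto simp: adjE doubleton_eq_iff)
  have conn: "connected ?V ?E"
  proof (rule connected_root[of b])
    show "b \<in> ?V" by simp
    have "reach ?V ?E b a" by (rule reach_step) (auto simp: adjE insert_commute)
    moreover have "reach ?V ?E b c" by (rule reach_step) (auto simp: adjE)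
    ultimately show "\<forall>x\<in>?V. reach ?V ?E b x" using reach_refl by auto
  qed
  have nbra: "adj ?E a y \<Longrightarrow> y = b" for y using ab by (auto simp: adjE doubleton_eq_iff)
  have ics: "induced_cycle_sets ?V ?E = {}"
  proof (rule ccontr)
    assume "induced_cycle_sets ?V ?E \<noteq> {}"
    then obtain S vs where S: "S \<subseteq> ?V" and cyc: "is_cycle_graph vs S {e \<in> ?E. e \<subseteq> S}"
      by (auto simp: induced_cycle_sets_def)
    have "card S \<ge> 3" using cyc distinct_card[of vs] by (auto simp: is_cycle_graph_def)
    hence "S = ?V" using S cV by (metis card_seteq fV)
    hence "a \<in> S" by simp
    then obtain y z where "y \<noteq> z" "adj ?E a y" "adj ?E a z" using two_nbrs[OF cyc, of ?E] by blast
    thus False using nbra by blast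
  qed
  have cc: "c1 ?V ?E = 0" unfolding c1_def ics by simp
  have two: "dissociation_set ?V ?E {x, y}" if "x \<in> ?V" "y \<in> ?V" for x y
    unfolding diss_set_iff using that dfree2[OF noloop noloop] by auto
  have up: "card D \<le> 2" if ds: "dissociation_set ?V ?E D" for D
  proof (rule ccontr)
    assume "\<not> card D \<le> 2"
    moreover have "D \<subseteq> ?V" using ds by (simp add: dissociation_set_def)
    moreover have "card D \<le> 3" using calculation(2) cV by (metis card_mono fV)
    ultimately have "card D = 3" by simp
    hence "D = ?V" using \<open>D \<subseteq> ?V\<close> cV by (metis card_seteq fV order_refl)
    thus False using two_in_D_nbrs[OF ds fV, of b a c] ab by (auto simp: adjE insert_commute)
  qed
  obtain D0 where D0: "dissociation_set ?V ?E D0" "card D0 = diss ?V ?E" using diss_attained[OF fV] by blast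
  have "card {a, b} \<le> diss ?V ?E" by (rule diss_ge[OF fV two]) auto
  hence dv: "diss ?V ?E = 2" using up[OF D0(1)] D0(2) ab by simp
  have av: "avoidp ?V ?E"
    unfolding avoidp_def
  proof
    fix u assume u: "u \<in> ?V"
    obtain x y where xy: "x \<in> ?V" "y \<in> ?V" "x \<noteq> y" "u \<noteq> x" "u \<noteq> y"
    proof -
      have "u = a \<or> u = b \<or> u = c" using u by simp
      thus ?thesis using that ab by (metis insertI1 insertI2)
    qed
    have "card {x, y} = 2" using xy by simp
    thus "\<exists>D. max_dissociation_set ?V ?E D \<and> u \<notin> D"
      using two[OF xy(1,2)] dv xy by (intro exI[of _ "{x, y}"]) (auto simp: max_dissociation_set_def)
  qed
  show ?thesis unfolding Good_def using fV w conn dv cE cV cc av by simp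
qed

lemma inC_Good: "inC V E \<Longrightarrow> Good V E"
proof (induction rule: inC.induct)
  case (base_P3 a b c) then show ?case by (rule Good_P3)
next
  case (base_cycle V E) then show ?case by (rule Good_cycle)
next
  case (base_spiked V E) then show ?case by (rule Good_spiked)
next
  case (op1 V E u v w x)
  have G: "Good {u, v, w} {{u, v}, {v, w}}" using Good_P3 \<open>distinct [u, v, w]\<close> .
  have dj: "V \<inter> {u, v, w} = {}" using op1 by auto
  have "Good (V \<union> {u, v, w}) (E \<union> {{u, v}, {v, w}} \<union> {{x, w}})"
    by (rule Good_glue[OF op1.IH G dj \<open>x \<in> V\<close>]) simp
  moreover have "E \<union> {{u, v}, {v, w}} \<union> {{x, w}} = E \<union> {{u, v}, {v, w}, {w, x}}"
    by (auto simp: insert_commute)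
  ultimately show ?case by simp
next
  case (op2 V E v u u' x)
  have "distinct [u, v, u']" using \<open>distinct [v, u, u']\<close> by auto
  hence G: "Good {u, v, u'} {{u, v}, {v, u'}}" by (rule Good_P3)
  have dj: "V \<inter> {u, v, u'} = {}" using op2 by auto
  have "Good (V \<union> {u, v, u'}) (E \<union> {{u, v}, {v, u'}} \<union> {{x, v}})"
    by (rule Good_glue[OF op2.IH G dj \<open>x \<in> V\<close>]) simp
  moreover have "E \<union> {{u, v}, {v, u'}} \<union> {{x, v}} = E \<union> {{v, u}, {v, u'}, {v, x}}"
    by (auto simp: insert_commute)
  moreover have "V \<union> {u, v, u'} = V \<union> {v, u, u'}" by auto
  ultimately show ?case by simp
next
  case (op3 V E H EH y x)
  have dj: "V \<inter> H = {}" using \<open>H \<inter> V = {}\<close> by auto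
  show ?case by (rule Good_glue[OF op3.IH Good_cycle[OF \<open>good_cycle H EH\<close>] dj \<open>x \<in> V\<close> \<open>y \<in> H\<close>])
next
  case (op4 V E H EH y x)
  have dj: "V \<inter> H = {}" using \<open>H \<inter> V = {}\<close> by auto
  show ?case by (rule Good_glue[OF op4.IH Good_spiked[OF \<open>very_good_spiked_cycle H EH\<close>] dj \<open>x \<in> V\<close> \<open>y \<in> H\<close>])
qed

theorem lemma1:
  fixes V :: "'a set" and E :: "'a set set"
  assumes "inC V E"
  shows "real (diss V E) =
           real (card V) - (real (card E) + real (card (components V E))
             + real (card {S \<in> induced_cycle_sets V E. card S mod 3 = 1})) / 3
         \<and> (\<forall>u\<in>V. \<exists>D. max_dissociation_set V E D \<and> u \<notin> D)"
proof -
  have G: "Good V E" using inC_Good[OF assms] .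
  hence comp: "components V E = {V}" using components_conn by (auto simp: Good_def)
  have e: "3 * diss V E + card E + 1 + c1 V E = 3 * card V" and av: "avoidp V E"
    using G by (auto simp: Good_def)
  have "real (3 * diss V E + card E + 1 + c1 V E) = real (3 * card V)" using e by simp
  hence "3 * real (diss V E) + real (card E) + 1 + real (c1 V E) = 3 * real (card V)" by simp
  hence "real (diss V E) = real (card V) - (real (card E) + 1 + real (c1 V E)) / 3" by (simp add: field_simps)
  thus ?thesis using comp av by (simp add: c1_def avoidp_def)
qed


end
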